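(* Let $\boldsymbol\theta^*\in\mathbb{R}^d\setminus\{\mathbf 0\}$ and $G(\boldsymbol\theta)=\mathbb{E}\log\big(\tfrac12\phi_d(\mathbf Y-\boldsymbol\theta)+\tfrac12\phi_d(\mathbf Y+\boldsymbol\theta)\big)$ where $\mathbf Y\sim\tfrac12N(-\boldsymbol\theta^*,I_d)+\tfrac12N(\boldsymbol\theta^*,I_d)$. Then $G$ has exactly three stationary points, $\mathbf 0$, $\boldsymbol\theta^*$ and $-\boldsymbol\theta^*$. If $d=1$, $0$ is a local minimum of $G$ and $\theta^*,-\theta^*$ are global maxima. If $d>1$, $\mathbf 0$ is a saddle point and $\boldsymbol\theta^*,-\boldsymbol\theta^*$ are global maxima.
   Context: $\phi_d$ is the density of $N(\mathbf 0,I_d)$. *)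

theory Defs
  imports "HOL-Analysis.Analysis"
begin

definition std_normal_density :: "'a::euclidean_space \<Rightarrow> real" where
  "std_normal_density y = (2 * pi) powr (- real DIM('a) / 2) * exp (- (norm y ^ 2) / 2)"

definition mix_density :: "'a::euclidean_space \<Rightarrow> 'a \<Rightarrow> real" where
  "mix_density t y = 1/2 * std_normal_density (y - t) + 1/2 * std_normal_density (y + t)"

definition popG :: "'a::euclidean_space \<Rightarrow> 'a \<Rightarrow> real" where
  "popG tstar t = (\<integral>y. mix_density tstar y * ln (mix_density t y) \<partial>lborel)"

definition stationary_point :: "('a::real_normed_vector \<Rightarrow> real) \<Rightarrow> 'a \<Rightarrow> bool" where
  "stationary_point f x \<longleftrightarrow> (f has_derivative (\<lambda>h. 0)) (at x)"

definition local_min_at :: "('a::topological_space \<Rightarrow> real) \<Rightarrow> 'a \<Rightarrow> bool" where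
  "local_min_at f x \<longleftrightarrow> (\<forall>\<^sub>F y in at x. f x \<le> f y)"

definition local_max_at :: "('a::topological_space \<Rightarrow> real) \<Rightarrow> 'a \<Rightarrow> bool" where
  "local_max_at f x \<longleftrightarrow> (\<forall>\<^sub>F y in at x. f y \<le> f x)"

definition global_max_at :: "('a \<Rightarrow> real) \<Rightarrow> 'a \<Rightarrow> bool" where
  "global_max_at f x \<longleftrightarrow> (\<forall>y. f y \<le> f x)"

definition saddle_point :: "('a::real_normed_vector \<Rightarrow> real) \<Rightarrow> 'a \<Rightarrow> bool" where
  "saddle_point f x \<longleftrightarrow> stationary_point f x \<and> \<not> local_min_at f x \<and> \<not> local_max_at f x"

end

theory Submission
  imports Defs "HOL-Probability.Distributions"
begin

abbreviation gd :: "'a::euclidean_space \<Rightarrow> real" where "gd \<equiv> Defs.std_normal_density"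

lemma gd_def': "gd (y::'a::euclidean_space) = (2 * pi) powr (- real DIM('a) / 2) * exp (- (norm y ^ 2) / 2)"
  by (simp add: Defs.std_normal_density_def)

lemma gd_pos: "gd y > 0"
  by (simp add: gd_def')

lemma gd_measurable[measurable]: "gd \<in> borel_measurable borel"
  unfolding Defs.std_normal_density_def[abs_def] by measurable

lemma norm_sum_Basis_sq:
  "norm (\<Sum>b\<in>Basis. f b *\<^sub>R b :: 'a::euclidean_space) ^ 2 = (\<Sum>b\<in>Basis. (f b)^2)"
proof -
  have "norm (\<Sum>b\<in>Basis. f b *\<^sub>R b :: 'a) ^ 2 = (\<Sum>b\<in>Basis. f b *\<^sub>R b :: 'a) \<bullet> (\<Sum>b\<in>Basis. f b *\<^sub>R b)"
    by (simp add: power2_norm_eq_inner)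
  also have "\<dots> = (\<Sum>b\<in>Basis. (f b)^2)"
    by (subst euclidean_inner) (simp add: inner_sum_left_Basis power2_eq_square)
  finally show ?thesis .
qed

lemma gd_prod:
  "gd (\<Sum>b\<in>Basis. f b *\<^sub>R b :: 'a::euclidean_space) = (\<Prod>b\<in>Basis. normal_density 0 1 (f b))"
proof -
  have c: "(2 * pi) powr (- real DIM('a) / 2) = (\<Prod>b\<in>(Basis::'a set). 1 / sqrt (2 * pi))"
  proof -
    have "(\<Prod>b\<in>(Basis::'a set). 1 / sqrt (2 * pi)) = ((2*pi) powr (-1/2)) ^ DIM('a)"
      by (simp add: prod_constant powr_minus_divide powr_half_sqrt)
    also have "\<dots> = (2 * pi) powr (- real DIM('a) / 2)"
      by (simp add: powr_realpow[symmetric] powr_powr)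
    finally show ?thesis by simp
  qed
  have e0: "- (norm (\<Sum>b\<in>Basis. f b *\<^sub>R b :: 'a) ^ 2) / 2 = (\<Sum>b\<in>(Basis::'a set). - ((f b)^2 / 2))"
    by (simp add: norm_sum_Basis_sq sum_negf sum_divide_distrib)
  have e: "exp (- (norm (\<Sum>b\<in>Basis. f b *\<^sub>R b :: 'a) ^ 2) / 2) = (\<Prod>b\<in>(Basis::'a set). exp (- ((f b)^2 / 2)))"
    unfolding e0 by (simp add: exp_sum)
  have "(\<Prod>b\<in>(Basis::'a set). normal_density 0 1 (f b)) = (\<Prod>b\<in>(Basis::'a set). 1 / sqrt (2 * pi) * exp (- ((f b)^2 / 2)))"
    by (simp add: Distributions.std_normal_density_def)
  also have "\<dots> = (\<Prod>b\<in>(Basis::'a set). 1 / sqrt (2 * pi)) * (\<Prod>b\<in>(Basis::'a set). exp (- ((f b)^2 / 2)))"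
    by (rule prod.distrib)
  finally show ?thesis
    unfolding gd_def' c e by simp
qed

lemma gd_integrable: "integrable lborel (gd :: 'a::euclidean_space \<Rightarrow> real)"
proof -
  interpret product_sigma_finite "\<lambda>_::'a. lborel" by standard
  have "integrable (\<Pi>\<^sub>M b\<in>(Basis::'a set). lborel) (\<lambda>f. \<Prod>b\<in>(Basis::'a set). normal_density 0 1 (f b))"
    by (intro product_integrable_prod) (auto intro: integrable_std_normal_moment[of 0, simplified])
  then show ?thesis
    by (subst lborel_eq) (simp add: integrable_distr_eq gd_prod)
qed

lemma gd_integral: "(\<integral>y. gd y \<partial>lborel) = (1::real)"
proof -
  interpret product_sigma_finite "\<lambda>_::'a. lborel" by standard
  have "(\<integral>y. (gd::'a\<Rightarrow>real) y \<partial>lborel) = (\<integral>f. (\<Prod>b\<in>(Basis::'a set). normal_density 0 1 (f b)) \<partial>(\<Pi>\<^sub>M b\<in>(Basis::'a set). lborel))"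
    by (subst lborel_eq) (simp add: integral_distr gd_prod)
  also have "\<dots> = (\<Prod>b\<in>(Basis::'a set). (\<integral>x. normal_density 0 1 x \<partial>lborel))"
    by (intro product_integral_prod) (auto intro: integrable_std_normal_moment[of 0, simplified])
  also have "\<dots> = 1"
    using integral_std_normal_moment_even[of 0] by simp
  finally show ?thesis .
qed

lemma tanh_measurable[measurable]: "(tanh :: real \<Rightarrow> real) \<in> borel_measurable borel"
  by (intro borel_measurable_continuous_onI continuous_intros) (metis cosh_real_pos order.irrefl)
lemma cosh_measurable[measurable]: "(cosh :: real \<Rightarrow> real) \<in> borel_measurable borel"
  by (intro borel_measurable_continuous_onI continuous_intros)

lemma nn_integral_affine_eucl:
  fixes f :: "'a::euclidean_space \<Rightarrow> ennreal"
  assumes [measurable]: "f \<in> borel_measurable borel" and c: "c \<noteq> 0"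
  shows "(\<integral>\<^sup>+x. f x \<partial>lborel) = ennreal (\<bar>c\<bar>^DIM('a)) * (\<integral>\<^sup>+x. f (m + c *\<^sub>R x) \<partial>lborel)"
  by (subst lborel_affine[OF c, of m]) (simp add: nn_integral_density nn_integral_distr nn_integral_cmult)

lemma integrable_affine_eucl:
  fixes f :: "'a::euclidean_space \<Rightarrow> real"
  assumes f: "integrable lborel f" and c: "c \<noteq> 0"
  shows "integrable lborel (\<lambda>x. f (m + c *\<^sub>R x))"
  using f f[THEN borel_measurable_integrable] c unfolding integrable_iff_bounded
  by (subst (asm) nn_integral_affine_eucl[where c=c and m=m]) (auto simp: ennreal_mult_less_top)

lemma integrable_affine_eucl_iff:
  fixes f :: "'a::euclidean_space \<Rightarrow> real"
  assumes c: "c \<noteq> 0"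
  shows "integrable lborel (\<lambda>x. f (m + c *\<^sub>R x)) \<longleftrightarrow> integrable lborel f"
proof
  assume "integrable lborel (\<lambda>x. f (m + c *\<^sub>R x))"
  from integrable_affine_eucl[OF this, of "1/c" "- (1/c) *\<^sub>R m"] c
  show "integrable lborel f" by (simp add: algebra_simps)
qed (use integrable_affine_eucl c in auto)

lemma integral_affine_eucl:
  fixes f :: "'a::euclidean_space \<Rightarrow> real"
  assumes c: "c \<noteq> 0"
  shows "(\<integral>x. f x \<partial>lborel) = \<bar>c\<bar>^DIM('a) * (\<integral>x. f (m + c *\<^sub>R x) \<partial>lborel)"
proof cases
  assume f[measurable]: "integrable lborel f" then show ?thesis
    using c f f[THEN borel_measurable_integrable] integrable_affine_eucl[OF f c, of m]
    by (subst lborel_affine[OF c, of m]) (simp add: integral_density integral_distr)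
next
  assume "\<not> integrable lborel f" with c show ?thesis
    by (simp add: integrable_affine_eucl_iff not_integrable_integral_eq)
qed

lemma integral_shift:
  fixes f :: "'a::euclidean_space \<Rightarrow> real"
  shows "(\<integral>x. f (x + m) \<partial>lborel) = (\<integral>x. f x \<partial>lborel)"
  using integral_affine_eucl[of 1 f m] by (simp add: add.commute)

lemma integrable_shift_iff:
  fixes f :: "'a::euclidean_space \<Rightarrow> real"
  shows "integrable lborel (\<lambda>x. f (x + m)) \<longleftrightarrow> integrable lborel f"
  using integrable_affine_eucl_iff[where c=1 and m=m and f=f] by (simp add: add.commute)

lemma integral_neg:
  fixes f :: "'a::euclidean_space \<Rightarrow> real"
  shows "(\<integral>x. f (- x) \<partial>lborel) = (\<integral>x. f x \<partial>lborel)"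
  using integral_affine_eucl[of "-1" f 0] by simp

lemma integrable_bound_real:
  fixes f g :: "'a \<Rightarrow> real"
  assumes "integrable M f" "g \<in> borel_measurable M" "\<And>x. \<bar>g x\<bar> \<le> f x"
  shows "integrable M g"
  by (rule Bochner_Integration.integrable_bound[OF assms(1,2)], rule AE_I2, simp, rule order_trans[OF assms(3) abs_ge_self])

lemma gd_sq_le: "gd (z::'a::euclidean_space) * norm z ^ 2 \<le> 4 * gd ((1 / sqrt 2) *\<^sub>R z)"
proof -
  define N where "N = (2 * pi) powr (- real DIM('a) / 2)"
  have N: "N > 0" unfolding N_def by simp
  define x where "x = norm z ^ 2"
  have "1 + x / 4 \<le> exp (x / 4)" by (rule exp_ge_add_one_self)
  then have "x \<le> 4 * exp (x/4)" by linarith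
  then have "x * exp (- x / 2) \<le> 4 * exp (x/4) * exp (- x/2)" by (intro mult_right_mono) auto
  also have "\<dots> = 4 * exp (- x / 4)" by (simp add: exp_add[symmetric])
  finally have 1: "x * exp (- x / 2) \<le> 4 * exp (- x / 4)" .
  have 2: "norm ((1 / sqrt 2) *\<^sub>R z) ^ 2 = x / 2"
    by (simp add: x_def power_mult_distrib power_divide)
  have "gd z * norm z ^ 2 = N * (x * exp (- x / 2))"
    unfolding gd_def' N_def[symmetric] x_def by simp
  also have "\<dots> \<le> N * (4 * exp (- x / 4))" using 1 N by (intro mult_left_mono) auto
  also have "\<dots> = 4 * gd ((1 / sqrt 2) *\<^sub>R z)"
    unfolding gd_def'[of "(1 / sqrt 2) *\<^sub>R z"] N_def[symmetric] 2 by simp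
  finally show ?thesis .
qed

lemma gd_sq_integrable: "integrable lborel (\<lambda>z::'a::euclidean_space. gd z * norm z ^ 2)"
proof (rule integrable_bound_real)
  show "integrable lborel (\<lambda>z::'a. 4 * gd ((1 / sqrt 2) *\<^sub>R z))"
    using integrable_affine_eucl[OF gd_integrable, of "1 / sqrt 2" 0] by simp
  show "\<bar>gd z * norm z ^ 2\<bar> \<le> 4 * gd ((1 / sqrt 2) *\<^sub>R z)" for z :: 'a
    using gd_sq_le[of z] gd_pos[of z] by simp
qed measurable

lemma gd_shift_integrable: "integrable lborel (\<lambda>y::'a::euclidean_space. gd (y - m))"
  using integrable_shift_iff[of gd "- m"] gd_integrable by simp

lemma gd_shift_sq_integrable: "integrable lborel (\<lambda>y::'a::euclidean_space. gd (y - m) * norm (y - m) ^ 2)"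
  using integrable_shift_iff[of "\<lambda>z. gd z * norm z ^ 2" "- m"] gd_sq_integrable by simp

lemma env_integrable: "integrable lborel (\<lambda>y::'a::euclidean_space. gd (y - m) * (1 + norm y ^ 2))"
proof (rule integrable_bound_real)
  show "integrable lborel (\<lambda>y::'a. 2 * (gd (y - m) * norm (y - m) ^ 2) + (1 + 2 * norm m ^ 2) * gd (y - m))"
    by (intro Bochner_Integration.integrable_add Bochner_Integration.integrable_mult_right gd_shift_sq_integrable gd_shift_integrable)
  fix y :: 'a
  have "norm y \<le> norm (y - m) + norm m" using norm_triangle_sub[of y m] by simp
  then have "norm y ^ 2 \<le> (norm (y - m) + norm m) ^ 2" by (simp add: power_mono)
  also have "\<dots> \<le> 2 * norm (y - m) ^ 2 + 2 * norm m ^ 2"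
  proof -
    have "(norm (y - m) + norm m)^2 + (norm (y - m) - norm m)^2 = 2 * norm (y - m) ^ 2 + 2 * norm m ^ 2"
      by (simp add: power2_sum power2_diff)
    moreover have "0 \<le> (norm (y - m) - norm m)^2" by simp
    ultimately show ?thesis by linarith
  qed
  finally have "1 + norm y ^ 2 \<le> 2 * norm (y - m) ^ 2 + (1 + 2 * norm m ^ 2)" by simp
  then have "gd (y - m) * (1 + norm y ^ 2) \<le> gd (y - m) * (2 * norm (y - m) ^ 2 + (1 + 2 * norm m ^ 2))"
    using gd_pos[of "y - m"] by (intro mult_left_mono) auto
  then show "\<bar>gd (y - m) * (1 + norm y ^ 2)\<bar> \<le> 2 * (gd (y - m) * norm (y - m) ^ 2) + (1 + 2 * norm m ^ 2) * gd (y - m)"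
    using gd_pos[of "y - m"] by (simp add: algebra_simps)
qed measurable

lemma quad_bound:
  fixes f f' :: "real \<Rightarrow> real"
  assumes der: "\<And>x. (f has_real_derivative f' x) (at x)" and f0: "f 0 = 0"
    and b: "\<And>x. \<bar>f' x\<bar> \<le> K * \<bar>x\<bar>"
  shows "\<bar>f d\<bar> \<le> K * d^2"
proof -
  have K: "K \<ge> 0" using b[of 1] by simp
  consider "d = 0" | "d > 0" | "d < 0" by linarith
  then show ?thesis
  proof cases
    case 1 then show ?thesis using f0 by simp
  next
    case 2
    from MVT2[OF 2, of f f'] der obtain z where z: "0 < z" "z < d" "f d - f 0 = (d - 0) * f' z" by blast
    have "\<bar>f d\<bar> = d * \<bar>f' z\<bar>" using z 2 f0 by (simp add: abs_mult)
    also have "\<dots> \<le> d * (K * \<bar>z\<bar>)" using b[of z] 2 by (intro mult_left_mono) auto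
    also have "\<dots> \<le> d * (K * d)" using z 2 K by (intro mult_left_mono) auto
    finally show ?thesis by (simp add: power2_eq_square mult_ac)
  next
    case 3
    from MVT2[OF 3, of f f'] der obtain z where z: "d < z" "z < 0" "f 0 - f d = (0 - d) * f' z" by blast
    have "\<bar>f d\<bar> = (- d) * \<bar>f' z\<bar>" using z 3 f0 by (simp add: abs_mult)
    also have "\<dots> \<le> (- d) * (K * \<bar>z\<bar>)" using b[of z] 3 by (intro mult_left_mono) auto
    also have "\<dots> \<le> (- d) * (K * (- d))" using z 3 K by (intro mult_left_mono) auto
    finally show ?thesis by (simp add: power2_eq_square mult_ac)
  qed
qed

lemma lin_bound:
  fixes f f' :: "real \<Rightarrow> real"
  assumes der: "\<And>x. (f has_real_derivative f' x) (at x)"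
    and b: "\<And>x. \<bar>f' x\<bar> \<le> K"
  shows "\<bar>f a - f c\<bar> \<le> K * \<bar>a - c\<bar>"
proof -
  consider "a = c" | "c < a" | "a < c" by linarith
  then show ?thesis
  proof cases
    case 1 then show ?thesis by simp
  next
    case 2
    from MVT2[OF 2, of f f'] der obtain z where "f a - f c = (a - c) * f' z" by blast
    then show ?thesis using b[of z] 2 by (simp add: abs_mult mult_left_mono mult.commute)
  next
    case 3
    from MVT2[OF 3, of f f'] der obtain z where "f c - f a = (c - a) * f' z" by blast
    then have "f a - f c = - ((c - a) * f' z)" by simp
    then have "\<bar>f a - f c\<bar> = (c - a) * \<bar>f' z\<bar>" using 3 by (simp add: abs_mult)
    also have "\<dots> \<le> (c - a) * K" using b[of z] 3 by (intro mult_left_mono) auto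
    finally show ?thesis using 3 by (simp add: mult.commute)
  qed
qed

lemma tanh_deriv: "(tanh has_real_derivative (1 - tanh x ^ 2)) (at (x::real))"
proof -
  have "((\<lambda>x. tanh x) has_real_derivative (1 - tanh x ^ 2) * 1) (at x)"
    by (rule has_field_derivative_tanh[OF _ DERIV_ident]) (metis cosh_real_pos order.irrefl)
  then show ?thesis by simp
qed

lemma tanh_abs_le1: "\<bar>tanh (x::real)\<bar> \<le> 1"
  using tanh_real_bounds[of x] by auto

lemma tanh_lipschitz: "\<bar>tanh a - tanh c\<bar> \<le> \<bar>a - c :: real\<bar>"
proof -
  have "\<bar>tanh a - tanh c\<bar> \<le> 1 * \<bar>a - c\<bar>"
  proof (rule lin_bound[of tanh "\<lambda>x. 1 - tanh x ^ 2"])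
    show "\<And>x. (tanh has_real_derivative 1 - (tanh x)\<^sup>2) (at x)" by (rule tanh_deriv)
    show "\<bar>1 - (tanh x)\<^sup>2\<bar> \<le> 1" for x :: real
    proof -
      have "tanh x ^ 2 < 1" using tanh_real_bounds[of x] by (simp add: abs_square_less_1 abs_less_iff)
      moreover have "0 \<le> tanh x ^ 2" by simp
      ultimately show ?thesis by (simp add: abs_le_iff)
    qed
  qed
  then show ?thesis by simp
qed

lemma lncosh_deriv: "((\<lambda>x. ln (cosh x)) has_real_derivative tanh x) (at (x::real))"
proof -
  have "((\<lambda>x. ln (cosh x)) has_real_derivative (1 / cosh x) * sinh x) (at x)"
    by (auto intro!: derivative_eq_intros)
  then show ?thesis by (simp add: tanh_def)
qed

lemma lncosh_quad: "\<bar>ln (cosh (a + d)) - ln (cosh a) - tanh a * d\<bar> \<le> 1 * (d::real)^2"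
proof (rule quad_bound[where f="\<lambda>x. ln (cosh (a + x)) - ln (cosh a) - tanh a * x" and f'="\<lambda>x. tanh (a + x) - tanh a"])
  show "((\<lambda>x. ln (cosh (a + x)) - ln (cosh a) - tanh a * x) has_real_derivative tanh (a + x) - tanh a) (at x)" for x
    using DERIV_chain2[OF lncosh_deriv, of "\<lambda>x. a + x" 1 x]
    by (auto intro!: derivative_eq_intros simp: tanh_def)
  show "\<bar>tanh (a + x) - tanh a\<bar> \<le> 1 * \<bar>x\<bar>" for x using tanh_lipschitz[of "a + x" a] by simp
qed simp

lemma tanh_quad: "\<bar>tanh (a + d) - tanh a - (1 - tanh a ^ 2) * d\<bar> \<le> 2 * (d::real)^2"
proof (rule quad_bound[where f="\<lambda>x. tanh (a + x) - tanh a - (1 - tanh a ^ 2) * x" and f'="\<lambda>x. tanh a ^ 2 - tanh (a + x) ^ 2"])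
  show "((\<lambda>x. tanh (a + x) - tanh a - (1 - tanh a ^ 2) * x) has_real_derivative tanh a ^ 2 - tanh (a + x) ^ 2) (at x)" for x
    using DERIV_chain2[OF tanh_deriv, of "\<lambda>x. a + x" 1 x]
    by (auto intro!: derivative_eq_intros)
  show "\<bar>tanh a ^ 2 - tanh (a + x) ^ 2\<bar> \<le> 2 * \<bar>x\<bar>" for x
  proof -
    have "\<bar>tanh a ^ 2 - tanh (a + x) ^ 2\<bar> = \<bar>tanh a - tanh (a + x)\<bar> * \<bar>tanh a + tanh (a + x)\<bar>"
      by (simp add: power2_eq_square abs_mult[symmetric] algebra_simps)
    also have "\<dots> \<le> \<bar>x\<bar> * 2"
      using tanh_lipschitz[of a "a + x"] tanh_abs_le1[of a] tanh_abs_le1[of "a + x"]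
      by (intro mult_mono) auto
    finally show ?thesis by simp
  qed
qed simp

lemma lncosh_bounds: "0 \<le> ln (cosh x) \<and> ln (cosh x) \<le> \<bar>x::real\<bar>"
proof
  show "0 \<le> ln (cosh x)" using cosh_real_ge_1[of x] by simp
  have "cosh x \<le> exp \<bar>x\<bar>"
    by (cases "x \<ge> 0") (auto simp: cosh_field_def)
  then show "ln (cosh x) \<le> \<bar>x\<bar>"
    using cosh_real_pos[of x] by (subst ln_exp[symmetric, of "\<bar>x\<bar>"], subst ln_le_cancel_iff) auto
qed

lemma gd_shift_exp: "gd (y - t) = gd (y::'a::euclidean_space) * exp (- (norm t ^ 2) / 2) * exp (t \<bullet> y)"
proof -
  have n: "norm (y - t) ^ 2 = norm y ^ 2 - 2 * (t \<bullet> y) + norm t ^ 2"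
    by (simp add: power2_norm_eq_inner inner_diff_left inner_diff_right inner_commute)
  have "- (norm (y - t) ^ 2) / 2 = - (norm y ^ 2) / 2 + (- (norm t ^ 2) / 2) + t \<bullet> y"
    unfolding n by (simp add: field_simps)
  then have "exp (- (norm (y - t) ^ 2) / 2) = exp (- (norm y ^ 2) / 2) * exp (- (norm t ^ 2) / 2) * exp (t \<bullet> y)"
    by (simp only: exp_add)
  then show ?thesis unfolding gd_def' by (simp add: mult_ac)
qed

lemma gd_shift_exp': "gd (y + t) = gd (y::'a::euclidean_space) * exp (- (norm t ^ 2) / 2) * exp (- (t \<bullet> y))"
  using gd_shift_exp[of y "- t"] by simp

lemma mix_eq: "mix_density t y = gd (y::'a::euclidean_space) * exp (- (norm t ^ 2) / 2) * cosh (t \<bullet> y)"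
  unfolding mix_density_def gd_shift_exp gd_shift_exp' cosh_field_def by (simp add: field_simps)

lemma mix_pos: "mix_density t y > 0"
  unfolding mix_eq using gd_pos[of y] by simp

lemma mix_minus: "mix_density (- t) = mix_density t"
  by (rule ext) (simp add: mix_eq)

lemma popG_minus: "popG s (- t) = popG s t"
  unfolding popG_def mix_minus ..

definition lnN :: "'a::euclidean_space itself \<Rightarrow> real" where
  "lnN _ = ln ((2 * pi) powr (- real DIM('a) / 2))"

lemma ln_mix: "ln (mix_density t y) = lnN TYPE('a) - norm y ^ 2 / 2 - norm t ^ 2 / 2 + ln (cosh (t \<bullet> (y::'a::euclidean_space)))"
  unfolding mix_eq gd_def' lnN_def
  by (simp add: ln_mult)

lemma mix_measurable[measurable]: "mix_density t \<in> borel_measurable borel"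
  unfolding mix_density_def[abs_def] by measurable

lemma norm_le_sq: "norm (y::'a::real_normed_vector) \<le> 1 + norm y ^ 2"
proof (cases "norm y \<le> 1")
  case True then show ?thesis using zero_le_power2[of "norm y"] by linarith
next
  case False
  then have "norm y * 1 \<le> norm y * norm y" by (intro mult_left_mono) auto
  then show ?thesis by (simp add: power2_eq_square)
qed

lemma le_mul1: "0 \<le> (a::real) \<Longrightarrow> 0 \<le> x \<Longrightarrow> a \<le> a * (1 + x)"
  by (simp add: algebra_simps)

lemma mix_int_bound:
  fixes g :: "'a::euclidean_space \<Rightarrow> real"
  assumes [measurable]: "g \<in> borel_measurable borel" and b: "\<And>y. \<bar>g y\<bar> \<le> C * (1 + norm y ^ 2)"
  shows "integrable lborel (\<lambda>y. mix_density s y * g y)"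
proof (rule integrable_bound_real)
  show "integrable lborel (\<lambda>y. C/2 * (gd (y - s) * (1 + norm y ^ 2)) + C/2 * (gd (y - (- s)) * (1 + norm y ^ 2)))"
    by (intro Bochner_Integration.integrable_add Bochner_Integration.integrable_mult_right env_integrable)
  fix y
  have "\<bar>mix_density s y * g y\<bar> = mix_density s y * \<bar>g y\<bar>" using mix_pos[of s y] by (simp add: abs_mult)
  also have "\<dots> \<le> mix_density s y * (C * (1 + norm y ^ 2))" using mix_pos[of s y] b[of y] by (intro mult_left_mono) auto
  also have "\<dots> = C/2 * (gd (y - s) * (1 + norm y ^ 2)) + C/2 * (gd (y - (- s)) * (1 + norm y ^ 2))"
    by (simp add: mix_density_def algebra_simps)
  finally show "\<bar>mix_density s y * g y\<bar> \<le> \<dots>" .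
qed measurable

lemma mix_integrable: "integrable lborel (mix_density (s::'a::euclidean_space))"
  using mix_int_bound[of "\<lambda>_. 1" 1 s] by simp

lemma mix_integral: "(\<integral>y. mix_density (s::'a::euclidean_space) y \<partial>lborel) = 1"
proof -
  have "(\<integral>y. mix_density s y \<partial>lborel) = 1/2 * (\<integral>y. gd (y - s) \<partial>lborel) + 1/2 * (\<integral>y. gd (y + s) \<partial>lborel)"
    unfolding mix_density_def using gd_shift_integrable[of s] gd_shift_integrable[of "- s"] by simp
  also have "\<dots> = 1"
    using integral_shift[of gd "- s"] integral_shift[of gd s] gd_integral by simp
  finally show ?thesis .
qed

lemma ln_mix_bound: "\<bar>ln (mix_density t y)\<bar> \<le> (\<bar>lnN TYPE('a)\<bar> + 1 + norm t ^ 2 + norm t) * (1 + norm (y::'a::euclidean_space) ^ 2)"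
proof -
  have "\<bar>ln (mix_density t y)\<bar> \<le> \<bar>lnN TYPE('a)\<bar> + norm y ^ 2 / 2 + norm t ^ 2 / 2 + \<bar>t \<bullet> y\<bar>"
    unfolding ln_mix using lncosh_bounds[of "t \<bullet> y"] abs_ge_self[of "lnN TYPE('a)"] abs_ge_minus_self[of "lnN TYPE('a)"]
      zero_le_power2[of "norm y"] zero_le_power2[of "norm t"] abs_ge_self[of "t \<bullet> y"]
    by (simp only: abs_le_iff) linarith
  also have "\<bar>t \<bullet> y\<bar> \<le> norm t * (1 + norm y ^ 2)"
    using Cauchy_Schwarz_ineq2[of t y] norm_le_sq[of y] by (meson mult_left_mono norm_ge_zero order_trans)
  then have "\<bar>lnN TYPE('a)\<bar> + norm y ^ 2 / 2 + norm t ^ 2 / 2 + \<bar>t \<bullet> y\<bar> \<le>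
     \<bar>lnN TYPE('a)\<bar> * (1 + norm y ^ 2) + 1 * (1 + norm y ^ 2) + norm t ^ 2 * (1 + norm y ^ 2) + norm t * (1 + norm y ^ 2)"
  proof (intro add_mono)
    show "norm t ^ 2 / 2 \<le> norm t ^ 2 * (1 + norm y ^ 2)"
      using le_mul1[of "norm t ^ 2" "norm y ^ 2", OF zero_le_power2 zero_le_power2] zero_le_power2[of "norm t"] by linarith
    show "norm y ^ 2 / 2 \<le> 1 * (1 + norm y ^ 2)" by simp
  qed (use \<open>\<bar>t \<bullet> y\<bar> \<le> norm t * (1 + norm y ^ 2)\<close> le_mul1 in auto)
  also have "\<dots> = (\<bar>lnN TYPE('a)\<bar> + 1 + norm t ^ 2 + norm t) * (1 + norm y ^ 2)" by (simp add: algebra_simps)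
  finally show ?thesis .
qed

lemma int_lnmix: "integrable lborel (\<lambda>y. mix_density s y * ln (mix_density t (y::'a::euclidean_space)))"
  by (rule mix_int_bound[OF _ ln_mix_bound]) measurable

lemma int_tanh: "integrable lborel (\<lambda>y. mix_density s y * (tanh (t \<bullet> y) * (h \<bullet> (y::'a::euclidean_space))))"
proof (rule mix_int_bound)
  show "\<bar>tanh (t \<bullet> y) * (h \<bullet> y)\<bar> \<le> norm h * (1 + norm y ^ 2)" for y
  proof -
    have "\<bar>tanh (t \<bullet> y) * (h \<bullet> y)\<bar> \<le> 1 * \<bar>h \<bullet> y\<bar>" unfolding abs_mult
      using tanh_abs_le1 by (intro mult_right_mono) auto
    also have "\<dots> \<le> norm h * norm y" using Cauchy_Schwarz_ineq2 by simp
    also have "\<dots> \<le> norm h * (1 + norm y ^ 2)" using norm_le_sq by (intro mult_left_mono) auto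
    finally show ?thesis .
  qed
qed measurable

lemma int_sq: "integrable lborel (\<lambda>y. mix_density s y * norm (y::'a::euclidean_space) ^ 2)"
  by (rule mix_int_bound[where C=1]) auto

lemma int_norm: "integrable lborel (\<lambda>y. mix_density s y * norm (y::'a::euclidean_space))"
  by (rule mix_int_bound[where C=1]) (auto simp: norm_le_sq)

definition Dg :: "'a::euclidean_space \<Rightarrow> 'a \<Rightarrow> 'a \<Rightarrow> real" where
  "Dg s t h = (\<integral>y. mix_density s y * (tanh (t \<bullet> y) * (h \<bullet> y)) \<partial>lborel) - t \<bullet> h"

definition M2 :: "'a::euclidean_space \<Rightarrow> real" where
  "M2 s = (\<integral>y. mix_density s y * norm y ^ 2 \<partial>lborel)"

lemma norm_add_sq: "norm (t + h) ^ 2 = norm t ^ 2 + 2 * (t \<bullet> h) + norm (h::'a::real_inner) ^ 2"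
  by (simp add: power2_norm_eq_inner inner_add_left inner_add_right inner_commute)

lemma G_quad:
  fixes s t h :: "'a::euclidean_space"
  shows "\<bar>popG s (t + h) - popG s t - Dg s t h\<bar> \<le> (1/2 + M2 s) * norm h ^ 2"
proof -
  define c0 where "c0 = - (t \<bullet> h) - norm h ^ 2 / 2"
  define R where "R y = ln (cosh ((t + h) \<bullet> y)) - ln (cosh (t \<bullet> y)) - tanh (t \<bullet> y) * (h \<bullet> y)" for y
  have pw: "mix_density s y * ln (mix_density (t + h) y) - mix_density s y * ln (mix_density t y)
      - mix_density s y * (tanh (t \<bullet> y) * (h \<bullet> y))
      = c0 * mix_density s y + mix_density s y * R y" for y
    unfolding ln_mix R_def norm_add_sq c0_def by (simp add: algebra_simps inner_add_left)
  have Rb: "\<bar>R y\<bar> \<le> norm h ^ 2 * (1 + norm y ^ 2)" for y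
  proof -
    have "\<bar>R y\<bar> \<le> 1 * (h \<bullet> y) ^ 2"
      unfolding R_def inner_add_left using lncosh_quad[of "t \<bullet> y" "h \<bullet> y"] by simp
    also have "\<dots> \<le> (norm h * norm y) ^ 2"
    proof -
      have "\<bar>h \<bullet> y\<bar> ^ 2 \<le> (norm h * norm y) ^ 2"
        by (rule power_mono) (use Cauchy_Schwarz_ineq2[of h y] in auto)
      then show ?thesis by simp
    qed
    also have "\<dots> = norm h ^ 2 * norm y ^ 2" by (simp add: power_mult_distrib)
    also have "\<dots> \<le> norm h ^ 2 * (1 + norm y ^ 2)" by (intro mult_left_mono) auto
    finally show ?thesis .
  qed
  have Rm[measurable]: "R \<in> borel_measurable borel" unfolding R_def[abs_def] by measurable
  have iR: "integrable lborel (\<lambda>y. mix_density s y * R y)"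
    by (rule mix_int_bound[OF Rm Rb])
  have "popG s (t + h) - popG s t - (\<integral>y. mix_density s y * (tanh (t \<bullet> y) * (h \<bullet> y)) \<partial>lborel)
      = (\<integral>y. mix_density s y * ln (mix_density (t + h) y) - mix_density s y * ln (mix_density t y)
      - mix_density s y * (tanh (t \<bullet> y) * (h \<bullet> y)) \<partial>lborel)"
  proof -
    have i1: "integrable lborel (\<lambda>y. mix_density s y * ln (mix_density (t + h) y) - mix_density s y * ln (mix_density t y))"
      by (intro Bochner_Integration.integrable_diff int_lnmix)
    show ?thesis unfolding popG_def
      by (simp add: Bochner_Integration.integral_diff[OF i1 int_tanh] Bochner_Integration.integral_diff[OF int_lnmix int_lnmix])
  qed
  also have "\<dots> = (\<integral>y. c0 * mix_density s y + mix_density s y * R y \<partial>lborel)"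
    unfolding pw ..
  also have "\<dots> = c0 + (\<integral>y. mix_density s y * R y \<partial>lborel)"
    using iR mix_integrable[of s] mix_integral[of s] by simp
  finally have eq: "popG s (t + h) - popG s t - Dg s t h = - (norm h ^ 2) / 2 + (\<integral>y. mix_density s y * R y \<partial>lborel)"
    unfolding Dg_def c0_def by simp
  have "\<bar>\<integral>y. mix_density s y * R y \<partial>lborel\<bar> \<le> (\<integral>y. norm h ^ 2 * (mix_density s y * norm y ^ 2) \<partial>lborel)"
  proof (rule integral_abs_bound_integral[OF iR])
    show "integrable lborel (\<lambda>y. norm h ^ 2 * (mix_density s y * norm y ^ 2))" by (intro Bochner_Integration.integrable_mult_right int_sq)
    fix y
    have "\<bar>R y\<bar> \<le> norm h ^ 2 * norm y ^ 2"
    proof -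
      have "\<bar>R y\<bar> \<le> 1 * (h \<bullet> y) ^ 2"
        unfolding R_def inner_add_left using lncosh_quad[of "t \<bullet> y" "h \<bullet> y"] by simp
      also have "\<dots> \<le> (norm h * norm y) ^ 2"
      proof -
      have "\<bar>h \<bullet> y\<bar> ^ 2 \<le> (norm h * norm y) ^ 2"
        by (rule power_mono) (use Cauchy_Schwarz_ineq2[of h y] in auto)
      then show ?thesis by simp
    qed
      finally show ?thesis by (simp add: power_mult_distrib)
    qed
    then have "mix_density s y * \<bar>R y\<bar> \<le> mix_density s y * (norm h ^ 2 * norm y ^ 2)"
      using mix_pos[of s y] by (intro mult_left_mono) auto
    then show "\<bar>mix_density s y * R y\<bar> \<le> norm h ^ 2 * (mix_density s y * norm y ^ 2)"
      using mix_pos[of s y] by (simp add: abs_mult mult_ac)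
  qed
  also have "\<dots> = norm h ^ 2 * M2 s" unfolding M2_def by simp
  finally have "\<bar>\<integral>y. mix_density s y * R y \<partial>lborel\<bar> \<le> norm h ^ 2 * M2 s" .
  then show ?thesis unfolding eq by (simp add: algebra_simps abs_le_iff) (smt (verit) zero_le_power2)
qed

lemma M2_nonneg: "M2 s \<ge> 0"
  unfolding M2_def by (intro integral_nonneg_AE AE_I2 mult_nonneg_nonneg) (auto simp: less_imp_le mix_pos)

lemma Dg_bounded_linear: "bounded_linear (Dg s t)"
proof (rule bounded_linear_intro[where K="(\<integral>y. mix_density s y * norm y \<partial>lborel) + norm t"])
  fix x y :: 'a
  show "Dg s t (x + y) = Dg s t x + Dg s t y"
    unfolding Dg_def using int_tanh[of s t x] int_tanh[of s t y]
    by (simp add: inner_add_left inner_add_right distrib_left algebra_simps)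
next
  fix r :: real and x :: 'a
  show "Dg s t (r *\<^sub>R x) = r *\<^sub>R Dg s t x"
    unfolding Dg_def by (simp add: algebra_simps)
next
  fix x :: 'a
  have "\<bar>\<integral>y. mix_density s y * (tanh (t \<bullet> y) * (x \<bullet> y)) \<partial>lborel\<bar> \<le> (\<integral>y. norm x * (mix_density s y * norm y) \<partial>lborel)"
  proof (rule integral_abs_bound_integral[OF int_tanh])
    show "integrable lborel (\<lambda>y. norm x * (mix_density s y * norm y))" by (intro Bochner_Integration.integrable_mult_right int_norm)
    fix y
    have "\<bar>tanh (t \<bullet> y) * (x \<bullet> y)\<bar> \<le> 1 * (norm x * norm y)"
      unfolding abs_mult using tanh_abs_le1 Cauchy_Schwarz_ineq2[of x y] by (intro mult_mono) auto
    then have "mix_density s y * \<bar>tanh (t \<bullet> y) * (x \<bullet> y)\<bar> \<le> mix_density s y * (norm x * norm y)"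
      using mix_pos[of s y] by (intro mult_left_mono) auto
    then show "\<bar>mix_density s y * (tanh (t \<bullet> y) * (x \<bullet> y))\<bar> \<le> norm x * (mix_density s y * norm y)"
      using mix_pos[of s y] by (simp add: abs_mult mult_ac)
  qed
  also have "\<dots> = norm x * (\<integral>y. mix_density s y * norm y \<partial>lborel)" by simp
  finally have 1: "\<bar>\<integral>y. mix_density s y * (tanh (t \<bullet> y) * (x \<bullet> y)) \<partial>lborel\<bar> \<le> norm x * (\<integral>y. mix_density s y * norm y \<partial>lborel)" .
  have 2: "\<bar>t \<bullet> x\<bar> \<le> norm x * norm t" using Cauchy_Schwarz_ineq2[of t x] by (simp add: mult.commute)
  show "norm (Dg s t x) \<le> norm x * ((\<integral>y. mix_density s y * norm y \<partial>lborel) + norm t)"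
    unfolding Dg_def real_norm_def using 1 2 by (simp add: distrib_left)
qed

lemma popG_has_derivative: "(popG s has_derivative Dg s t) (at t)"
  unfolding has_derivative_at_alt
proof (intro conjI allI impI Dg_bounded_linear)
  fix e :: real assume e: "e > 0"
  define C where "C = 1/2 + M2 s"
  have C: "C > 0" unfolding C_def using M2_nonneg[of s] by simp
  show "\<exists>d>0. \<forall>y. norm (y - t) < d \<longrightarrow> norm (popG s y - popG s t - Dg s t (y - t)) \<le> e * norm (y - t)"
  proof (intro exI[of _ "e / C"] conjI allI impI)
    show "e / C > 0" using e C by simp
    fix y assume y: "norm (y - t) < e / C"
    have "norm (popG s y - popG s t - Dg s t (y - t)) \<le> C * norm (y - t) ^ 2"
      using G_quad[of s t "y - t"] unfolding C_def by simp
    also have "\<dots> = (C * norm (y - t)) * norm (y - t)" by (simp add: power2_eq_square)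
    also have "\<dots> \<le> e * norm (y - t)"
      using y C by (intro mult_right_mono) (auto simp: field_simps)
    finally show "norm (popG s y - popG s t - Dg s t (y - t)) \<le> e * norm (y - t)" .
  qed
qed

lemma popG_le: "popG s t \<le> popG s (s::'a::euclidean_space)"
proof -
  have "popG s t - popG s s = (\<integral>y. mix_density s y * ln (mix_density t y) - mix_density s y * ln (mix_density s y) \<partial>lborel)"
    unfolding popG_def by (rule Bochner_Integration.integral_diff[OF int_lnmix int_lnmix, symmetric])
  also have "\<dots> \<le> (\<integral>y. mix_density t y - mix_density s y \<partial>lborel)"
  proof (rule Bochner_Integration.integral_mono)
    show "integrable lborel (\<lambda>y. mix_density s y * ln (mix_density t y) - mix_density s y * ln (mix_density s y))"
      by (intro Bochner_Integration.integrable_diff int_lnmix)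
    show "integrable lborel (\<lambda>y. mix_density t y - mix_density s y)"
      by (intro Bochner_Integration.integrable_diff mix_integrable)
    fix y :: 'a
    have a: "mix_density t y > 0" and b: "mix_density s y > 0" using mix_pos by auto
    have "ln (mix_density t y / mix_density s y) \<le> mix_density t y / mix_density s y - 1"
      using a b by (intro ln_le_minus_one) auto
    then have "mix_density s y * ln (mix_density t y / mix_density s y) \<le> mix_density s y * (mix_density t y / mix_density s y - 1)"
      using b by (intro mult_left_mono) auto
    then show "mix_density s y * ln (mix_density t y) - mix_density s y * ln (mix_density s y) \<le> mix_density t y - mix_density s y"
      using a b by (simp add: ln_div algebra_simps)
  qed
  also have "\<dots> = 0"
    using mix_integral[of t] mix_integral[of s] mix_integrable[of t] mix_integrable[of s] by simp
  finally show ?thesis by simp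
qed

lemma global_max_s: "global_max_at (popG s) s"
  unfolding global_max_at_def using popG_le by blast

lemma global_max_ms: "global_max_at (popG s) (- s)"
  unfolding global_max_at_def by (simp add: popG_minus popG_le)

lemma stationary_iff: "stationary_point (popG s) t \<longleftrightarrow> Dg s t = (\<lambda>h. 0)"
  unfolding stationary_point_def
  using popG_has_derivative[of s t] has_derivative_unique by (metis (no_types))

lemma stationary_s: "stationary_point (popG s) (s::'a::euclidean_space)"
  unfolding stationary_iff
  by (rule differential_zero_maxmin[of s UNIV, OF _ _ popG_has_derivative]) (use popG_le in auto)

lemma stationary_ms: "stationary_point (popG s) (- (s::'a::euclidean_space))"
  unfolding stationary_iff
  by (rule differential_zero_maxmin[of "- s" UNIV, OF _ _ popG_has_derivative]) (auto simp: popG_minus popG_le)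

lemma stationary_0: "stationary_point (popG s) (0::'a::euclidean_space)"
  unfolding stationary_iff by (rule ext) (simp add: Dg_def)

lemma quad_bound_loc:
  fixes f f' :: "real \<Rightarrow> real"
  assumes der: "\<And>x. (f has_real_derivative f' x) (at x)" and f0: "f 0 = 0"
    and b: "\<And>x. \<bar>x\<bar> \<le> \<bar>d\<bar> \<Longrightarrow> \<bar>f' x\<bar> \<le> K * \<bar>x\<bar>" and K: "K \<ge> 0"
  shows "\<bar>f d\<bar> \<le> K * d^2"
proof -
  consider "d = 0" | "d > 0" | "d < 0" by linarith
  then show ?thesis
  proof cases
    case 1 then show ?thesis using f0 by simp
  next
    case 2
    from MVT2[OF 2, of f f'] der obtain z where z: "0 < z" "z < d" "f d - f 0 = (d - 0) * f' z" by blast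
    have "\<bar>f d\<bar> = d * \<bar>f' z\<bar>" using z 2 f0 by (simp add: abs_mult)
    also have "\<dots> \<le> d * (K * \<bar>z\<bar>)" using b[of z] z 2 by (intro mult_left_mono) auto
    also have "\<dots> \<le> d * (K * d)" using z 2 K by (intro mult_left_mono) auto
    finally show ?thesis by (simp add: power2_eq_square mult_ac)
  next
    case 3
    from MVT2[OF 3, of f f'] der obtain z where z: "d < z" "z < 0" "f 0 - f d = (0 - d) * f' z" by blast
    have "\<bar>f d\<bar> = (- d) * \<bar>f' z\<bar>" using z 3 f0 by (simp add: abs_mult)
    also have "\<dots> \<le> (- d) * (K * \<bar>z\<bar>)" using b[of z] z 3 by (intro mult_left_mono) auto
    also have "\<dots> \<le> (- d) * (K * (- d))" using z 3 K by (intro mult_left_mono) auto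
    finally show ?thesis by (simp add: power2_eq_square mult_ac)
  qed
qed

lemma exp_m1_bound: "\<bar>exp x - 1\<bar> \<le> \<bar>x\<bar> * exp \<bar>x::real\<bar>"
proof (cases "x \<ge> 0")
  case True
  have "1 - x \<le> exp (- x)" using exp_ge_add_one_self[of "- x"] by simp
  then have "(1 - x) * exp x \<le> exp (- x) * exp x" by (intro mult_right_mono) auto
  then have "exp x - x * exp x \<le> 1" by (simp add: exp_minus algebra_simps)
  moreover have "exp x \<ge> 1" using True by simp
  ultimately show ?thesis using True by simp
next
  case False
  have "1 + x \<le> exp x" by (rule exp_ge_add_one_self)
  moreover have "exp x \<le> 1" using False by simp
  moreover have "- x * 1 \<le> - x * exp (- x)" using False by (intro mult_left_mono) auto
  ultimately have g: "1 - exp x \<le> - x * exp (- x)" by linarith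
  show ?thesis using False g \<open>exp x \<le> 1\<close> by (simp add: abs_if)
qed

lemma exp_quad: "\<bar>exp d - 1 - d\<bar> \<le> exp \<bar>d\<bar> * (d::real)^2"
proof (rule quad_bound_loc[where f="\<lambda>x. exp x - 1 - x" and f'="\<lambda>x. exp x - 1"])
  show "((\<lambda>x. exp x - 1 - x) has_real_derivative exp x - 1) (at x)" for x
    by (auto intro!: derivative_eq_intros)
  fix x :: real assume x: "\<bar>x\<bar> \<le> \<bar>d\<bar>"
  have "\<bar>exp x - 1\<bar> \<le> \<bar>x\<bar> * exp \<bar>x\<bar>" by (rule exp_m1_bound)
  also have "\<dots> \<le> \<bar>x\<bar> * exp \<bar>d\<bar>" using x by (intro mult_left_mono) auto
  finally show "\<bar>exp x - 1\<bar> \<le> exp \<bar>d\<bar> * \<bar>x\<bar>" by (simp add: mult.commute)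
qed auto

lemma tilt_bound:
  fixes p q s :: real
  assumes q: "q \<ge> 0" and s: "0 < s" "s \<le> 1"
  shows "\<bar>exp (- (s^2 * q) / 2) * exp (s * p) - 1 - s * p\<bar> \<le> s^2 * ((\<bar>p\<bar> + q)^2 * exp q * (exp p + exp (- p)) + q)"
proof -
  define x where "x = s * p - s^2 * q / 2"
  have ex: "exp (- (s^2 * q) / 2) * exp (s * p) = exp x" unfolding x_def by (simp add: exp_add[symmetric])
  have s2: "s^2 \<le> s" using s by (simp add: power2_eq_square mult_le_cancel_left1)
  have ax: "\<bar>x\<bar> \<le> s * (\<bar>p\<bar> + q)"
  proof -
    have "\<bar>x\<bar> \<le> \<bar>s * p\<bar> + \<bar>s^2 * q / 2\<bar>" unfolding x_def by (rule abs_triangle_ineq4)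
    moreover have "\<bar>s * p\<bar> = s * \<bar>p\<bar>" using s by (simp add: abs_mult)
    moreover have "\<bar>s^2 * q / 2\<bar> = s^2 * q / 2" using q by simp
    moreover have "s^2 * q \<le> s * q" by (rule mult_right_mono[OF s2 q])
    moreover have "0 \<le> s * q" using s q by simp
    ultimately show ?thesis by (simp add: algebra_simps)
  qed
  have ax1: "\<bar>x\<bar> \<le> \<bar>p\<bar> + q"
    using ax mult_left_le_one_le[of "\<bar>p\<bar> + q" s] s q by simp
  have x2: "x^2 \<le> s^2 * (\<bar>p\<bar> + q)^2"
  proof -
    have "\<bar>x\<bar>^2 \<le> (s * (\<bar>p\<bar> + q))^2" using ax by (intro power_mono) auto
    then show ?thesis by (simp add: power_mult_distrib)
  qed
  have e: "exp \<bar>x\<bar> \<le> exp q * (exp p + exp (- p))"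
  proof -
    have "exp \<bar>x\<bar> \<le> exp (\<bar>p\<bar> + q)" using ax1 by simp
    also have "\<dots> = exp q * exp \<bar>p\<bar>" by (simp add: exp_add)
    also have "exp \<bar>p\<bar> \<le> exp p + exp (- p)"
      using exp_gt_zero[of p] exp_gt_zero[of "- p"] by (cases "p \<ge> 0") (simp_all add: abs_if)
    then have "exp q * exp \<bar>p\<bar> \<le> exp q * (exp p + exp (- p))" by (intro mult_left_mono) auto
    finally show ?thesis .
  qed
  have "\<bar>exp x - 1 - s * p\<bar> \<le> \<bar>exp x - 1 - x\<bar> + s^2 * q / 2"
  proof -
    have "exp x - 1 - s * p = (exp x - 1 - x) - s^2 * q / 2" unfolding x_def by simp
    then have "\<bar>exp x - 1 - s * p\<bar> \<le> \<bar>exp x - 1 - x\<bar> + \<bar>s^2 * q / 2\<bar>" by (metis abs_triangle_ineq4)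
    then show ?thesis using q by simp
  qed
  also have "\<bar>exp x - 1 - x\<bar> \<le> exp \<bar>x\<bar> * x^2" by (rule exp_quad)
  also have "\<dots> \<le> (exp q * (exp p + exp (- p))) * (s^2 * (\<bar>p\<bar> + q)^2)"
    using e x2 by (intro mult_mono) auto
  also have "s^2 * q / 2 \<le> s^2 * q" using q by (simp add: mult_nonneg_nonneg)
  finally show ?thesis unfolding ex by (simp add: algebra_simps)
qed

lemma gd_bdd_int:
  fixes f :: "'a::euclidean_space \<Rightarrow> real"
  assumes [measurable]: "f \<in> borel_measurable borel" and b: "\<And>z. \<bar>f z\<bar> \<le> 1"
  shows "integrable lborel (\<lambda>z. gd z * f z)"
proof (rule integrable_bound_real[OF gd_integrable])
  fix z :: 'a
  have "\<bar>gd z * f z\<bar> = gd z * \<bar>f z\<bar>" using gd_pos[of z] by (simp add: abs_mult)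
  also have "\<dots> \<le> gd z * 1" using gd_pos[of z] b[of z] by (intro mult_left_mono) auto
  finally show "\<bar>gd z * f z\<bar> \<le> gd z" by simp
qed measurable

lemma gd_env_int:
  fixes f :: "'a::euclidean_space \<Rightarrow> real"
  assumes [measurable]: "f \<in> borel_measurable borel" and b: "\<And>z. \<bar>f z\<bar> \<le> C * (1 + norm z ^ 2)"
  shows "integrable lborel (\<lambda>z. gd z * f z)"
proof (rule integrable_bound_real)
  show "integrable lborel (\<lambda>z. C * (gd (z - 0) * (1 + norm z ^ 2)))"
    by (intro Bochner_Integration.integrable_mult_right env_integrable)
  fix z :: 'a
  have "\<bar>gd z * f z\<bar> = gd z * \<bar>f z\<bar>" using gd_pos[of z] by (simp add: abs_mult)
  also have "\<dots> \<le> gd z * (C * (1 + norm z ^ 2))" using gd_pos[of z] b[of z] by (intro mult_left_mono) auto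
  finally show "\<bar>gd z * f z\<bar> \<le> C * (gd (z - 0) * (1 + norm z ^ 2))" by (simp add: mult_ac)
qed measurable

lemma sq_sum_le: "((a::real) + b)^2 \<le> 2 * a^2 + 2 * b^2"
proof -
  have "(a + b)^2 + (a - b)^2 = 2 * a^2 + 2 * b^2" by (simp add: power2_sum power2_diff)
  moreover have "0 \<le> (a - b)^2" by simp
  ultimately show ?thesis by linarith
qed

lemma Phi_int:
  fixes u :: "'a::euclidean_space"
  shows "integrable lborel (\<lambda>w. gd w * ((\<bar>u \<bullet> w\<bar> + norm u ^ 2)^2 * exp (norm u ^ 2) * (exp (u \<bullet> w) + exp (- (u \<bullet> w))) + norm u ^ 2))"
proof (rule integrable_bound_real)
  define q where "q = norm u ^ 2"
  define C where "C = (2 * norm u ^ 2 + 2 * q^2) * exp q * exp (q/2)"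
  show "integrable lborel (\<lambda>w. C * (gd (w - u) * (1 + norm w ^ 2)) + C * (gd (w - (- u)) * (1 + norm w ^ 2)) + q * gd w)"
    by (intro Bochner_Integration.integrable_add Bochner_Integration.integrable_mult_right env_integrable gd_integrable)
  fix w :: 'a
  have e1: "gd w * exp (u \<bullet> w) = exp (q/2) * gd (w - u)"
    unfolding gd_shift_exp[of w u] q_def by (simp add: exp_minus field_simps)
  have e2: "gd w * exp (- (u \<bullet> w)) = exp (q/2) * gd (w - (- u))"
    using gd_shift_exp[of w "- u"] unfolding q_def by (simp add: exp_minus field_simps)
  have b1: "(\<bar>u \<bullet> w\<bar> + q)^2 \<le> (2 * norm u ^ 2 + 2 * q^2) * (1 + norm w ^ 2)"
  proof -
    have "(\<bar>u \<bullet> w\<bar> + q)^2 \<le> 2 * \<bar>u \<bullet> w\<bar>^2 + 2 * q^2" by (rule sq_sum_le)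
    also have "\<bar>u \<bullet> w\<bar>^2 \<le> (norm u * norm w)^2"
      by (rule power_mono) (use Cauchy_Schwarz_ineq2[of u w] in auto)
    also have "(norm u * norm w)^2 = norm u ^ 2 * norm w ^ 2" by (simp add: power_mult_distrib)
    also have "2 * (norm u ^ 2 * norm w ^ 2) + 2 * q^2 \<le> (2 * norm u ^ 2 + 2 * q^2) * (1 + norm w ^ 2)"
      by (simp add: algebra_simps)
    finally show ?thesis by simp
  qed
  have nn: "0 \<le> (\<bar>u \<bullet> w\<bar> + q)^2 * exp q" by simp
  define X where "X = (\<bar>u \<bullet> w\<bar> + q)^2 * exp q"
  have "gd w * ((\<bar>u \<bullet> w\<bar> + q)^2 * exp q * (exp (u \<bullet> w) + exp (- (u \<bullet> w))) + q)
      = X * (gd w * exp (u \<bullet> w) + gd w * exp (- (u \<bullet> w))) + q * gd w"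
    unfolding X_def by (simp add: algebra_simps)
  also have "\<dots> = X * (exp (q/2) * gd (w - u) + exp (q/2) * gd (w - (- u))) + q * gd w"
    unfolding e1 e2 ..
  also have "\<dots> = (\<bar>u \<bullet> w\<bar> + q)^2 * exp q * exp (q/2) * (gd (w - u) + gd (w - (- u))) + q * gd w"
    unfolding X_def by (simp add: algebra_simps)
  also have "\<dots> \<le> (2 * norm u ^ 2 + 2 * q^2) * (1 + norm w ^ 2) * exp q * exp (q/2) * (gd (w - u) + gd (w - (- u))) + q * gd w"
    using b1 gd_pos[of "w - u"] gd_pos[of "w - (- u)"]
    by (intro add_right_mono mult_right_mono) auto
  also have "\<dots> = C * (gd (w - u) * (1 + norm w ^ 2)) + C * (gd (w - (- u)) * (1 + norm w ^ 2)) + q * gd w"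
    unfolding C_def by (simp add: algebra_simps)
  finally have "gd w * ((\<bar>u \<bullet> w\<bar> + q)^2 * exp q * (exp (u \<bullet> w) + exp (- (u \<bullet> w))) + q) \<le> \<dots>" .
  moreover have "0 \<le> gd w * ((\<bar>u \<bullet> w\<bar> + q)^2 * exp q * (exp (u \<bullet> w) + exp (- (u \<bullet> w))) + q)"
    using gd_pos[of w] unfolding q_def by (intro mult_nonneg_nonneg add_nonneg_nonneg) auto
  ultimately show "\<bar>gd w * ((\<bar>u \<bullet> w\<bar> + norm u ^ 2)^2 * exp (norm u ^ 2) * (exp (u \<bullet> w) + exp (- (u \<bullet> w))) + norm u ^ 2)\<bar>
      \<le> C * (gd (w - u) * (1 + norm w ^ 2)) + C * (gd (w - (- u)) * (1 + norm w ^ 2)) + q * gd w"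
    unfolding q_def by simp
qed measurable

lemma small_eq:
  fixes A B K :: real
  assumes "\<And>s. 0 < s \<Longrightarrow> s \<le> 1 \<Longrightarrow> \<bar>A - B\<bar> \<le> K * s"
  shows "A = B"
proof (rule ccontr)
  assume ne: "A \<noteq> B"
  define \<delta> where "\<delta> = \<bar>A - B\<bar>"
  have d: "\<delta> > 0" using ne unfolding \<delta>_def by simp
  define K' where "K' = \<bar>K\<bar> + 1"
  have K': "K' > 0" unfolding K'_def by simp
  define s where "s = min 1 (\<delta> / (2 * K'))"
  have s: "0 < s" "s \<le> 1" unfolding s_def using d K' by auto
  have "\<delta> \<le> K * s" using assms[OF s] unfolding \<delta>_def .
  also have "\<dots> \<le> K' * s" unfolding K'_def using s by (intro mult_right_mono) auto
  also have "\<dots> \<le> K' * (\<delta> / (2 * K'))" unfolding s_def using K' by (intro mult_left_mono) auto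
  also have "\<dots> = \<delta> / 2" using K' by simp
  finally show False using d by simp
qed

lemma stein:
  fixes u t :: "'a::euclidean_space" and m :: real
  shows "(\<integral>z. gd z * ((u \<bullet> z) * tanh (m + t \<bullet> z)) \<partial>lborel) = (t \<bullet> u) * (\<integral>z. gd z * (1 - tanh (m + t \<bullet> z) ^ 2) \<partial>lborel)"
proof -
  define T where "T z = tanh (m + t \<bullet> z)" for z
  define k where "k = t \<bullet> u"
  define q where "q = norm u ^ 2"
  define A where "A = (\<integral>z. gd z * ((u \<bullet> z) * T z) \<partial>lborel)"
  define B' where "B' = (\<integral>z. gd z * (1 - T z ^ 2) \<partial>lborel)"
  define J where "J s = (\<integral>z. gd z * tanh (m + t \<bullet> z + s * k) \<partial>lborel)" for s
  define Phi where "Phi w = (\<bar>u \<bullet> w\<bar> + q)^2 * exp q * (exp (u \<bullet> w) + exp (- (u \<bullet> w))) + q" for w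
  define IP where "IP = (\<integral>w. gd w * Phi w \<partial>lborel)"
  have [measurable]: "T \<in> borel_measurable borel" unfolding T_def[abs_def] by measurable
  have iPhi: "integrable lborel (\<lambda>w. gd w * Phi w)" unfolding Phi_def q_def by (rule Phi_int)
  have iJ: "integrable lborel (\<lambda>z. gd z * tanh (m + t \<bullet> z + c))" for c
    by (rule gd_bdd_int) (auto simp: tanh_abs_le1)
  have iB: "integrable lborel (\<lambda>z. gd z * (1 - T z ^ 2))"
  proof (rule gd_bdd_int)
    show "\<bar>1 - T z ^ 2\<bar> \<le> 1" for z
    proof -
      have "T z ^ 2 \<le> 1" using tanh_abs_le1[of "m + t \<bullet> z"] unfolding T_def by (simp add: abs_square_le_1)
      then show ?thesis by simp
    qed
  qed measurable
  have iA: "integrable lborel (\<lambda>z. gd z * ((u \<bullet> z) * T z))"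
  proof (rule gd_env_int[where C="norm u"])
    fix z
    have "\<bar>(u \<bullet> z) * T z\<bar> \<le> \<bar>u \<bullet> z\<bar> * 1" unfolding abs_mult T_def using tanh_abs_le1 by (intro mult_left_mono) auto
    also have "\<dots> \<le> norm u * norm z" using Cauchy_Schwarz_ineq2[of u z] by simp
    also have "\<dots> \<le> norm u * (1 + norm z ^ 2)" using norm_le_sq[of z] by (intro mult_left_mono) auto
    finally show "\<bar>(u \<bullet> z) * T z\<bar> \<le> norm u * (1 + norm z ^ 2)" .
  qed measurable
  have c1: "\<bar>J s - J 0 - s * (k * B')\<bar> \<le> 2 * k^2 * s^2" for s
  proof -
    define F where "F z = gd z * tanh (m + t \<bullet> z + s * k) - gd z * tanh (m + t \<bullet> z + 0 * k) - (s * k) * (gd z * (1 - T z ^ 2))" for z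
    have iF: "integrable lborel F" unfolding F_def
      by (intro Bochner_Integration.integrable_diff Bochner_Integration.integrable_mult_right iJ iB)
    have iG: "integrable lborel (\<lambda>z::'a. 2 * (s * k)^2 * gd z)"
      by (intro Bochner_Integration.integrable_mult_right gd_integrable)
    have eq: "J s - J 0 - s * (k * B') = (\<integral>z. F z \<partial>lborel)"
      unfolding J_def B'_def F_def
      by (subst Bochner_Integration.integral_diff[OF Bochner_Integration.integrable_diff[OF iJ iJ] Bochner_Integration.integrable_mult_right[OF iB]],
          subst Bochner_Integration.integral_diff[OF iJ iJ]) simp
    have "\<bar>\<integral>z. F z \<partial>lborel\<bar> \<le> (\<integral>z. 2 * (s * k)^2 * gd (z::'a) \<partial>lborel)"
    proof (rule integral_abs_bound_integral[OF iF iG])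
      fix z :: 'a
      have "F z = gd z * (tanh ((m + t \<bullet> z) + s * k) - tanh (m + t \<bullet> z) - (1 - tanh (m + t \<bullet> z) ^ 2) * (s * k))"
        unfolding T_def F_def by (simp add: algebra_simps)
      also have "\<bar>\<dots>\<bar> \<le> gd z * (2 * (s * k)^2)"
        unfolding abs_mult using gd_pos[of z] tanh_quad[of "m + t \<bullet> z" "s * k"] by (intro mult_mono) auto
      finally show "\<bar>F z\<bar> \<le> 2 * (s * k)^2 * gd z" by (simp add: mult_ac)
    qed
    also have "\<dots> = 2 * (s * k)^2" using gd_integral[where 'a='a] by simp
    finally show ?thesis unfolding eq by (simp add: power_mult_distrib mult_ac)
  qed
  have c2: "\<bar>J s - J 0 - s * A\<bar> \<le> IP * s^2" if s: "0 < s" "s \<le> 1" for s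
  proof -
    have Js: "J s = (\<integral>w. gd (w - s *\<^sub>R u) * T w \<partial>lborel)"
    proof -
      have "J s = (\<integral>z. gd ((z + s *\<^sub>R u) - s *\<^sub>R u) * T (z + s *\<^sub>R u) \<partial>lborel)"
        unfolding J_def T_def k_def by (simp add: inner_add_right add_ac)
      also have "\<dots> = (\<integral>w. gd (w - s *\<^sub>R u) * T w \<partial>lborel)"
        by (rule integral_shift[of "\<lambda>w. gd (w - s *\<^sub>R u) * T w"])
      finally show ?thesis .
    qed
    have J0: "J 0 = (\<integral>w. gd w * T w \<partial>lborel)" unfolding J_def T_def by simp
    have iS: "integrable lborel (\<lambda>w. gd (w - s *\<^sub>R u) * T w)"
    proof (rule integrable_bound_real[OF gd_shift_integrable[of "s *\<^sub>R u"]])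
      fix w :: 'a
      show "\<bar>gd (w - s *\<^sub>R u) * T w\<bar> \<le> gd (w - s *\<^sub>R u)"
        using gd_pos[of "w - s *\<^sub>R u"] tanh_abs_le1[of "m + t \<bullet> w"] unfolding T_def abs_mult
        by (simp add: mult_left_le)
    qed measurable
    have i0: "integrable lborel (\<lambda>w. gd w * T w)"
      by (rule gd_bdd_int) (auto simp: T_def tanh_abs_le1)
    define F where "F w = gd (w - s *\<^sub>R u) * T w - gd w * T w - s * (gd w * ((u \<bullet> w) * T w))" for w
    have iF: "integrable lborel F" unfolding F_def
      by (intro Bochner_Integration.integrable_diff Bochner_Integration.integrable_mult_right iS i0 iA)
    have iG: "integrable lborel (\<lambda>w. s^2 * (gd w * Phi w))"
      by (intro Bochner_Integration.integrable_mult_right iPhi)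
    have eq: "J s - J 0 - s * A = (\<integral>w. F w \<partial>lborel)"
      unfolding Js J0 A_def F_def
      by (subst Bochner_Integration.integral_diff[OF Bochner_Integration.integrable_diff[OF iS i0] Bochner_Integration.integrable_mult_right[OF iA]],
          subst Bochner_Integration.integral_diff[OF iS i0]) simp
    have "\<bar>\<integral>w. F w \<partial>lborel\<bar> \<le> (\<integral>w. s^2 * (gd w * Phi w) \<partial>lborel)"
    proof (rule integral_abs_bound_integral[OF iF iG])
      fix w :: 'a
      have "F w = gd w * T w * (exp (- (s^2 * q) / 2) * exp (s * (u \<bullet> w)) - 1 - s * (u \<bullet> w))"
        unfolding F_def gd_shift_exp[of w "s *\<^sub>R u"] q_def by (simp add: algebra_simps power_mult_distrib)
      also have "\<bar>\<dots>\<bar> \<le> gd w * 1 * (s^2 * Phi w)"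
        unfolding abs_mult Phi_def
        using gd_pos[of w] tanh_abs_le1[of "m + t \<bullet> w"] tilt_bound[of q s "u \<bullet> w"] s unfolding T_def q_def
        by (intro mult_mono) auto
      finally show "\<bar>F w\<bar> \<le> s^2 * (gd w * Phi w)"
        by (simp add: mult_ac)
    qed
    also have "\<dots> = IP * s^2" unfolding IP_def by simp
    finally show ?thesis unfolding eq .
  qed
  have "A = k * B'"
  proof (rule small_eq[where K="2 * k^2 + IP"])
    fix s :: real assume s: "0 < s" "s \<le> 1"
    have "\<bar>s * A - s * (k * B')\<bar> \<le> \<bar>J s - J 0 - s * (k * B')\<bar> + \<bar>J s - J 0 - s * A\<bar>" by linarith
    also have "\<dots> \<le> 2 * k^2 * s^2 + IP * s^2" using c1[of s] c2[OF s] by linarith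
    finally have x: "\<bar>s * A - s * (k * B')\<bar> \<le> 2 * k^2 * s^2 + IP * s^2" .
    moreover have "\<bar>s * A - s * (k * B')\<bar> = s * \<bar>A - k * B'\<bar>"
      using s by (simp add: abs_mult right_diff_distrib[symmetric])
    ultimately have "s * \<bar>A - k * B'\<bar> \<le> s * ((2 * k^2 + IP) * s)"
      by (simp add: power2_eq_square algebra_simps)
    then show "\<bar>A - k * B'\<bar> \<le> (2 * k^2 + IP) * s" using s by simp
  qed
  then show ?thesis unfolding A_def B'_def T_def k_def .
qed

lemma integral_pos_cont:
  fixes f :: "'a::euclidean_space \<Rightarrow> real"
  assumes i: "integrable lborel f" and c: "continuous_on UNIV f"
    and nn: "\<And>x. 0 \<le> f x" and p: "0 < f x0"
  shows "0 < integral\<^sup>L lborel f"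
proof -
  have ge: "0 \<le> integral\<^sup>L lborel f" using nn by (intro integral_nonneg_AE) auto
  have "integral\<^sup>L lborel f \<noteq> 0"
  proof
    assume "integral\<^sup>L lborel f = 0"
    then have "AE x in lborel. f x = 0"
      using integral_nonneg_eq_0_iff_AE[OF i] nn by auto
    then obtain N where N: "{x \<in> space lborel. \<not> f x = 0} \<subseteq> N" "emeasure lborel N = 0" "N \<in> sets lborel"
      by (rule AE_E)
    have "N \<in> null_sets lborel" using N by (simp add: null_sets_def)
    then have "N \<in> null_sets lebesgue" by (rule null_sets_completionI)
    then have "negligible N" by (simp add: negligible_iff_null_sets)
    moreover have "{x. 0 < f x} \<subseteq> N" using N by auto
    ultimately have "negligible {x. 0 < f x}" by (rule negligible_subset)
    moreover have "open {x. (\<lambda>_. 0) x < f x}" by (rule open_Collect_less) (auto intro: c continuous_on_const)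
    moreover have "{x. 0 < f x} \<noteq> {}" using p by auto
    ultimately show False using open_not_negligible by auto
  qed
  then show ?thesis using ge by simp
qed

lemma xtanh_strict: "0 \<le> a \<Longrightarrow> a < b \<Longrightarrow> a * tanh a < b * tanh (b::real)"
proof -
  assume a: "0 \<le> a" and ab: "a < b"
  have "a * tanh a \<le> a * tanh b" using a ab by (intro mult_left_mono) auto
  also have "\<dots> < b * tanh b" using a ab by (intro mult_strict_right_mono) auto
  finally show ?thesis .
qed

lemma xtanh_abs: "x * tanh x = \<bar>x\<bar> * tanh \<bar>x::real\<bar>"
  by (cases "x \<ge> 0") auto

lemma cosh_ratio_deriv:
  fixes \<alpha> \<beta> :: real
  shows "((\<lambda>x. cosh (\<alpha> * x) / cosh (\<beta> * x)) has_real_derivative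
     (\<alpha> * sinh (\<alpha> * x) * cosh (\<beta> * x) - cosh (\<alpha> * x) * (\<beta> * sinh (\<beta> * x))) / (cosh (\<beta> * x))^2) (at x)"
  using cosh_real_pos[of "\<beta> * x"]
  by (auto intro!: derivative_eq_intros simp: power2_eq_square algebra_simps)

lemma cosh_ratio_mono:
  fixes \<alpha> \<beta> :: real
  assumes ab: "0 < \<beta>" "\<beta> < \<alpha>" and a: "0 \<le> a" "a < b"
  shows "cosh (\<alpha> * a) / cosh (\<beta> * a) < cosh (\<alpha> * b) / cosh (\<beta> * b)"
proof -
  define R where "R x = cosh (\<alpha> * x) / cosh (\<beta> * x)" for x
  define R' where "R' x = (\<alpha> * sinh (\<alpha> * x) * cosh (\<beta> * x) - cosh (\<alpha> * x) * (\<beta> * sinh (\<beta> * x))) / (cosh (\<beta> * x))^2" for x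
  obtain z where z: "a < z" "z < b" "R b - R a = (b - a) * R' z"
    using MVT2[OF a(2), of R R'] cosh_ratio_deriv unfolding R_def R'_def by blast
  have zp: "z > 0" using z a by simp
  have t1: "tanh (\<beta> * z) < tanh (\<alpha> * z)" using ab zp by simp
  have t0: "0 < tanh (\<beta> * z)" using ab zp by simp
  have "\<beta> * tanh (\<beta> * z) < \<alpha> * tanh (\<alpha> * z)"
  proof -
    have "\<beta> * tanh (\<beta> * z) < \<alpha> * tanh (\<beta> * z)" using ab t0 by (intro mult_strict_right_mono) auto
    also have "\<dots> < \<alpha> * tanh (\<alpha> * z)" using ab t1 by (intro mult_strict_left_mono) auto
    finally show ?thesis .
  qed
  then have "\<beta> * (sinh (\<beta> * z) / cosh (\<beta> * z)) < \<alpha> * (sinh (\<alpha> * z) / cosh (\<alpha> * z))"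
    by (simp add: tanh_def)
  then have "\<beta> * sinh (\<beta> * z) * cosh (\<alpha> * z) < \<alpha> * sinh (\<alpha> * z) * cosh (\<beta> * z)"
    using cosh_real_pos[of "\<alpha> * z"] cosh_real_pos[of "\<beta> * z"]
    by (simp add: field_simps)
  then have "R' z > 0" unfolding R'_def using cosh_real_pos[of "\<beta> * z"]
    by (intro divide_pos_pos) (auto simp: algebra_simps)
  then have "R b - R a > 0" using z by simp
  then show ?thesis unfolding R_def by simp
qed

lemma Q_sign:
  fixes \<alpha> \<beta> c2 :: real
  assumes ab: "0 < \<beta>" "\<beta> < \<alpha>" and c2: "c2 > 0"
  defines "Q x \<equiv> exp (- (\<alpha>^2 * c2) / 2) * cosh (\<alpha> * x) - exp (- (\<beta>^2 * c2) / 2) * cosh (\<beta> * x)"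
  obtains x0 where "x0 > 0" "\<And>x. \<bar>x\<bar> < x0 \<Longrightarrow> Q x < 0" "\<And>x. \<bar>x\<bar> > x0 \<Longrightarrow> Q x > 0"
proof -
  define A where "A = exp (- (\<alpha>^2 * c2) / 2)"
  define B where "B = exp (- (\<beta>^2 * c2) / 2)"
  have A: "A > 0" and B: "B > 0" unfolding A_def B_def by auto
  have AB: "A < B"
  proof -
    have "\<beta>^2 < \<alpha>^2" using ab by (intro power_strict_mono) auto
    then show ?thesis unfolding A_def B_def using c2 by simp
  qed
  define R where "R x = A / B * (cosh (\<alpha> * x) / cosh (\<beta> * x))" for x
  have Rmono: "R a < R b" if "0 \<le> a" "a < b" for a b
    unfolding R_def using cosh_ratio_mono[OF ab that] A B by (intro mult_strict_left_mono) auto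
  have QR: "Q x = B * cosh (\<beta> * x) * (R x - 1)" for x
    unfolding Q_def R_def A_def[symmetric] B_def[symmetric] using B cosh_real_pos[of "\<beta> * x"]
    by (simp add: field_simps)
  have Qeven: "Q x = Q \<bar>x\<bar>" for x unfolding Q_def by (cases "x \<ge> 0") auto
  have sgn: "(Q x < 0 \<longleftrightarrow> R x < 1) \<and> (Q x > 0 \<longleftrightarrow> R x > 1)" for x
  proof -
    obtain P where P: "P > 0" "B * cosh (\<beta> * x) = P" using B by (metis cosh_real_pos mult_pos_pos)
    show ?thesis unfolding QR P(2) using P(1) by (auto simp: mult_less_0_iff zero_less_mult_iff)
  qed
  have R0: "R 0 < 1" unfolding R_def using A B AB by simp
  define X where "X = ln (4 * B / A) / (\<alpha> - \<beta>)"
  have X: "X > 0" unfolding X_def using A B AB ab by (auto intro!: divide_pos_pos simp: field_simps)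
  have RX: "R X \<ge> 1"
  proof -
    have "exp (\<alpha> * X) / 2 \<le> cosh (\<alpha> * X)" by (simp add: cosh_field_def)
    moreover have "cosh (\<beta> * X) \<le> exp (\<beta> * X)" using ab X by (simp add: cosh_field_def)
    ultimately have "(exp (\<alpha> * X) / 2) / exp (\<beta> * X) \<le> cosh (\<alpha> * X) / cosh (\<beta> * X)"
      using cosh_real_pos[of "\<beta> * X"] by (intro frac_le) auto
    moreover have "(exp (\<alpha> * X) / 2) / exp (\<beta> * X) = exp ((\<alpha> - \<beta>) * X) / 2"
      by (simp add: exp_diff left_diff_distrib)
    moreover have "exp ((\<alpha> - \<beta>) * X) = 4 * B / A" unfolding X_def using ab A B AB by simp
    ultimately have "2 * B / A \<le> cosh (\<alpha> * X) / cosh (\<beta> * X)" by simp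
    then have "A / B * (2 * B / A) \<le> A / B * (cosh (\<alpha> * X) / cosh (\<beta> * X))"
      using A B by (intro mult_left_mono) auto
    moreover have "A / B * (2 * B / A) = 2" using A B by simp
    ultimately have "2 \<le> R X" unfolding R_def by linarith
    then show ?thesis by linarith
  qed
  have contR: "continuous_on {0..X} R" unfolding R_def
    by (intro continuous_intros) (auto simp: less_imp_neq[OF cosh_real_pos, symmetric])
  obtain x0 where x0: "0 \<le> x0" "x0 \<le> X" "R x0 = 1"
    using IVT'[of R 0 1 X, OF _ RX _ contR] R0 X by auto
  have x0p: "x0 > 0" using x0 R0 by (cases "x0 = 0") auto
  show ?thesis
  proof (rule that[OF x0p])
    fix x assume "\<bar>x\<bar> < x0"
    then have "R \<bar>x\<bar> < R x0" by (intro Rmono) auto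
    then have "Q \<bar>x\<bar> < 0" using sgn x0 by simp
    then show "Q x < 0" using Qeven by simp
  next
    fix x assume "\<bar>x\<bar> > x0"
    then have "R x0 < R \<bar>x\<bar>" using x0 by (intro Rmono) auto
    then have "Q \<bar>x\<bar> > 0" using sgn x0 by simp
    then show "Q x > 0" using Qeven by simp
  qed
qed

lemma mix_tanh: "mix_density t y * ((t \<bullet> y) * tanh (t \<bullet> y)) = (t \<bullet> y) / 2 * gd (y - t) - (t \<bullet> y) / 2 * gd (y + (t::'a::euclidean_space))"
proof -
  have "cosh (t \<bullet> y) * tanh (t \<bullet> y) = sinh (t \<bullet> y)"
    using cosh_real_pos[of "t \<bullet> y"] by (simp add: tanh_def)
  then have "mix_density t y * ((t \<bullet> y) * tanh (t \<bullet> y)) = gd y * exp (- (norm t ^ 2) / 2) * (t \<bullet> y) * sinh (t \<bullet> y)"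
    unfolding mix_eq by (metis (no_types, lifting) mult.assoc mult.left_commute)
  also have "\<dots> = (t \<bullet> y) / 2 * gd (y - t) - (t \<bullet> y) / 2 * gd (y + t)"
    unfolding gd_shift_exp gd_shift_exp' sinh_field_def by (simp add: field_simps)
  finally show ?thesis .
qed

lemma self_moment: "(\<integral>y. mix_density t y * ((t \<bullet> y) * tanh (t \<bullet> y)) \<partial>lborel) = norm (t::'a::euclidean_space) ^ 2"
proof -
  have i0: "integrable lborel (\<lambda>z. gd z * (t \<bullet> z))"
  proof (rule gd_env_int[where C="norm t"])
    show "\<bar>t \<bullet> z\<bar> \<le> norm t * (1 + norm z ^ 2)" for z :: 'a
      using Cauchy_Schwarz_ineq2[of t z] norm_le_sq[of z] by (meson mult_left_mono norm_ge_zero order_trans)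
  qed measurable
  have iP: "integrable lborel (\<lambda>z. gd z * (t \<bullet> (z + m)))" for m
    using Bochner_Integration.integrable_add[OF i0 Bochner_Integration.integrable_mult_right[OF gd_integrable, of "t \<bullet> m"]]
    by (simp add: inner_add_right algebra_simps)
  have ia: "integrable lborel (\<lambda>y. (t \<bullet> y) / 2 * gd (y - m))" for m
  proof -
    have "integrable lborel (\<lambda>z. 1/2 * (gd z * (t \<bullet> (z + m))))" by (intro Bochner_Integration.integrable_mult_right iP)
    then have "integrable lborel (\<lambda>z. (\<lambda>y. (t \<bullet> y) / 2 * gd (y - m)) (z + m))" by (simp add: mult_ac)
    then show ?thesis by (subst (asm) integrable_shift_iff)
  qed
  have I: "(\<integral>y. (t \<bullet> y) / 2 * gd (y - m) \<partial>lborel) = 1/2 * ((\<integral>z. gd z * (t \<bullet> z) \<partial>lborel) + t \<bullet> m)" for m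
  proof -
    have "(\<integral>y. (t \<bullet> y) / 2 * gd (y - m) \<partial>lborel) = (\<integral>z. (t \<bullet> (z + m)) / 2 * gd ((z + m) - m) \<partial>lborel)"
      by (rule integral_shift[symmetric])
    also have "\<dots> = (\<integral>z. 1/2 * (gd z * (t \<bullet> z)) + (t \<bullet> m)/2 * gd (z::'a) \<partial>lborel)"
      by (intro Bochner_Integration.integral_cong) (simp_all add: inner_add_right field_simps)
    also have "\<dots> = (\<integral>z. 1/2 * (gd z * (t \<bullet> z)) \<partial>lborel) + (\<integral>z. (t \<bullet> m)/2 * gd (z::'a) \<partial>lborel)"
      by (rule Bochner_Integration.integral_add) (intro Bochner_Integration.integrable_mult_right i0 gd_integrable)+
    also have "\<dots> = 1/2 * (\<integral>z. gd z * (t \<bullet> z) \<partial>lborel) + (t \<bullet> m)/2 * (\<integral>z. gd (z::'a) \<partial>lborel)"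
      by simp
    finally show ?thesis using gd_integral[where 'a='a] by simp
  qed
  have "(\<integral>y. mix_density t y * ((t \<bullet> y) * tanh (t \<bullet> y)) \<partial>lborel) = (\<integral>y. (t \<bullet> y) / 2 * gd (y - t) - (t \<bullet> y) / 2 * gd (y - (- t)) \<partial>lborel)"
    unfolding mix_tanh by simp
  also have "\<dots> = (\<integral>y. (t \<bullet> y) / 2 * gd (y - t) \<partial>lborel) - (\<integral>y. (t \<bullet> y) / 2 * gd (y - (- t)) \<partial>lborel)"
    by (rule Bochner_Integration.integral_diff[OF ia ia])
  also have "\<dots> = t \<bullet> t" unfolding I by (simp add: field_simps)
  finally show ?thesis by (simp add: power2_norm_eq_inner)
qed

lemma F_int: "integrable lborel (\<lambda>y. mix_density s y * ((t \<bullet> y) * tanh (t \<bullet> (y::'a::euclidean_space))))"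
  using int_tanh[of s t t] by (simp add: mult_ac)

lemma Dg_self: "Dg s t t = (\<integral>y. (mix_density s y - mix_density t y) * ((t \<bullet> y) * tanh (t \<bullet> (y::'a::euclidean_space))) \<partial>lborel)"
proof -
  have "Dg s t t = (\<integral>y. mix_density s y * ((t \<bullet> y) * tanh (t \<bullet> y)) \<partial>lborel) - (\<integral>y. mix_density t y * ((t \<bullet> y) * tanh (t \<bullet> y)) \<partial>lborel)"
    unfolding Dg_def self_moment by (simp add: mult_ac power2_norm_eq_inner)
  also have "\<dots> = (\<integral>y. mix_density s y * ((t \<bullet> y) * tanh (t \<bullet> y)) - mix_density t y * ((t \<bullet> y) * tanh (t \<bullet> y)) \<partial>lborel)"
    by (rule Bochner_Integration.integral_diff[OF F_int F_int, symmetric])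
  finally show ?thesis by (simp add: algebra_simps)
qed

lemma mix_cont: "continuous_on UNIV (mix_density (t::'a::euclidean_space))"
  unfolding mix_density_def[abs_def] Defs.std_normal_density_def[abs_def]
  by (intro continuous_intros) auto

lemma Dg_par_core:
  fixes s :: "'a::euclidean_space" and \<kappa> e x0 :: real
  assumes s: "s \<noteq> 0" and k: "\<kappa> > 0" and e: "e = 1 \<or> e = -1" and x0: "x0 > 0"
    and W1: "\<And>x. \<bar>x\<bar> < x0 \<Longrightarrow> e * (exp (- (norm s ^ 2) / 2) * cosh x - exp (- (\<kappa>^2 * norm s ^ 2) / 2) * cosh (\<kappa> * x)) < 0"
    and W2: "\<And>x. \<bar>x\<bar> > x0 \<Longrightarrow> e * (exp (- (norm s ^ 2) / 2) * cosh x - exp (- (\<kappa>^2 * norm s ^ 2) / 2) * cosh (\<kappa> * x)) > 0"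
  shows "e * Dg s (\<kappa> *\<^sub>R s) (\<kappa> *\<^sub>R s) > 0"
proof -
  define t where "t = \<kappa> *\<^sub>R s"
  define W where "W x = exp (- (norm s ^ 2) / 2) * cosh x - exp (- (\<kappa>^2 * norm s ^ 2) / 2) * cosh (\<kappa> * x)" for x
  define Fk where "Fk x = \<kappa> * x * tanh (\<kappa> * x)" for x
  define c where "c = Fk x0"
  define F where "F y = (t \<bullet> y) * tanh (t \<bullet> y)" for y
  define dd where "dd y = mix_density s y - mix_density t y" for y
  define g where "g y = e * (dd y * (F y - c))" for y
  have c2: "norm s ^ 2 > 0" using s by simp
  have ddW: "dd y = gd y * W (s \<bullet> y)" for y
    unfolding dd_def W_def t_def mix_eq by (simp add: power_mult_distrib algebra_simps)
  have FF: "F y = Fk (s \<bullet> y)" for y unfolding F_def Fk_def t_def by (simp add: mult.assoc)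
  have Fkabs: "Fk x = (\<kappa> * \<bar>x\<bar>) * tanh (\<kappa> * \<bar>x\<bar>)" for x
    unfolding Fk_def using xtanh_abs[of "\<kappa> * x"] k by (simp add: abs_mult)
  have Fk_lt: "\<bar>x\<bar> < x0 \<Longrightarrow> Fk x < c" for x
    unfolding c_def Fkabs using Fkabs[of x0] x0 k
    by (metis abs_ge_zero abs_of_pos mult_nonneg_nonneg mult_strict_left_mono less_imp_le xtanh_strict)
  have Fk_gt: "\<bar>x\<bar> > x0 \<Longrightarrow> Fk x > c" for x
    unfolding c_def using Fkabs[of x] Fkabs[of x0] x0 k
    by (metis abs_of_pos mult_nonneg_nonneg mult_strict_left_mono less_imp_le xtanh_strict)
  have Fk_eq: "\<bar>x\<bar> = x0 \<Longrightarrow> Fk x = c" for x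
    unfolding c_def using Fkabs[of x] Fkabs[of x0] x0 by simp
  have gnn: "0 \<le> g y" for y
  proof -
    have g': "g y = gd y * ((e * W (s \<bullet> y)) * (Fk (s \<bullet> y) - c))"
      unfolding g_def ddW FF by (simp add: mult_ac)
    consider "\<bar>s \<bullet> y\<bar> < x0" | "\<bar>s \<bullet> y\<bar> > x0" | "\<bar>s \<bullet> y\<bar> = x0" by linarith
    then have "0 \<le> (e * W (s \<bullet> y)) * (Fk (s \<bullet> y) - c)"
    proof cases
      case 1
      have a: "e * W (s \<bullet> y) \<le> 0" using W1[OF 1] unfolding W_def by simp
      have b: "Fk (s \<bullet> y) - c \<le> 0" using Fk_lt[OF 1] by simp
      show ?thesis using mult_nonpos_nonpos[OF a b] .
    next
      case 2
      have a: "0 \<le> e * W (s \<bullet> y)" using W2[OF 2] unfolding W_def by simp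
      have b: "0 \<le> Fk (s \<bullet> y) - c" using Fk_gt[OF 2] by simp
      show ?thesis using mult_nonneg_nonneg[OF a b] .
    next
      case 3 then show ?thesis using Fk_eq by simp
    qed
    then show ?thesis unfolding g' using gd_pos[of y] by simp
  qed
  define y0 where "y0 = (2 * x0 / norm s ^ 2) *\<^sub>R s"
  have sy0: "s \<bullet> y0 = 2 * x0" unfolding y0_def using c2 by (simp add: power2_norm_eq_inner)
  have gpos: "0 < g y0"
  proof -
    have g': "g y0 = gd y0 * ((e * W (s \<bullet> y0)) * (Fk (s \<bullet> y0) - c))"
      unfolding g_def ddW FF by (simp add: mult_ac)
    have "\<bar>s \<bullet> y0\<bar> > x0" unfolding sy0 using x0 by simp
    then have a: "0 < e * W (s \<bullet> y0)" and b: "0 < Fk (s \<bullet> y0) - c"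
      using W2[of "s \<bullet> y0"] Fk_gt[of "s \<bullet> y0"] unfolding W_def by auto
    then have "0 < (e * W (s \<bullet> y0)) * (Fk (s \<bullet> y0) - c)" by (rule mult_pos_pos)
    then show ?thesis unfolding g' using gd_pos[of y0] by simp
  qed
  have idd: "integrable lborel dd" unfolding dd_def by (intro Bochner_Integration.integrable_diff mix_integrable)
  have idF: "integrable lborel (\<lambda>y. dd y * F y)" unfolding dd_def F_def left_diff_distrib
    by (intro Bochner_Integration.integrable_diff F_int)
  have ig: "integrable lborel g" unfolding g_def right_diff_distrib
    by (intro Bochner_Integration.integrable_mult_right Bochner_Integration.integrable_diff idF) (intro Bochner_Integration.integrable_mult_left idd)
  have dd0: "(\<integral>y. dd y \<partial>lborel) = 0"
    unfolding dd_def using mix_integral[of s] mix_integral[of t] mix_integrable[of s] mix_integrable[of t] by simp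
  have Dgeq: "Dg s t t = (\<integral>y. dd y * F y \<partial>lborel)" unfolding Dg_self dd_def F_def ..
  have "(\<integral>y. g y \<partial>lborel) = e * ((\<integral>y. dd y * F y \<partial>lborel) - c * (\<integral>y. dd y \<partial>lborel))"
    unfolding g_def right_diff_distrib using idF idd by simp
  also have "\<dots> = e * Dg s t t" unfolding Dgeq dd0 by simp
  finally have geq: "(\<integral>y. g y \<partial>lborel) = e * Dg s t t" .
  have cg: "continuous_on UNIV g"
    unfolding g_def dd_def F_def
    by (intro continuous_intros mix_cont) (auto simp: less_imp_neq[OF cosh_real_pos, symmetric])
  have "0 < (\<integral>y. g y \<partial>lborel)" by (rule integral_pos_cont[OF ig cg gnn gpos])
  then show ?thesis unfolding geq t_def .
qed

lemma Dg_par_lt1: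
  fixes s :: "'a::euclidean_space"
  assumes "s \<noteq> 0" "0 < \<kappa>" "\<kappa> < 1"
  shows "Dg s (\<kappa> *\<^sub>R s) (\<kappa> *\<^sub>R s) > 0"
proof -
  have c2: "norm s ^ 2 > 0" using assms by simp
  obtain x0 where x0: "x0 > 0"
    and A: "\<And>x. \<bar>x\<bar> < x0 \<Longrightarrow> exp (- (1^2 * norm s ^ 2) / 2) * cosh (1 * x) - exp (- (\<kappa>^2 * norm s ^ 2) / 2) * cosh (\<kappa> * x) < 0"
    and B: "\<And>x. \<bar>x\<bar> > x0 \<Longrightarrow> exp (- (1^2 * norm s ^ 2) / 2) * cosh (1 * x) - exp (- (\<kappa>^2 * norm s ^ 2) / 2) * cosh (\<kappa> * x) > 0"
    by (rule Q_sign[of \<kappa> 1 "norm s ^ 2"]) (use assms c2 in auto)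
  have "1 * Dg s (\<kappa> *\<^sub>R s) (\<kappa> *\<^sub>R s) > 0"
    by (rule Dg_par_core[OF assms(1,2) _ x0]) (use A B in auto)
  then show ?thesis by simp
qed

lemma Dg_par_gt1:
  fixes s :: "'a::euclidean_space"
  assumes "s \<noteq> 0" "1 < \<kappa>"
  shows "Dg s (\<kappa> *\<^sub>R s) (\<kappa> *\<^sub>R s) < 0"
proof -
  have c2: "norm s ^ 2 > 0" using assms by simp
  obtain x0 where x0: "x0 > 0"
    and A: "\<And>x. \<bar>x\<bar> < x0 \<Longrightarrow> exp (- (\<kappa>^2 * norm s ^ 2) / 2) * cosh (\<kappa> * x) - exp (- (1^2 * norm s ^ 2) / 2) * cosh (1 * x) < 0"
    and B: "\<And>x. \<bar>x\<bar> > x0 \<Longrightarrow> exp (- (\<kappa>^2 * norm s ^ 2) / 2) * cosh (\<kappa> * x) - exp (- (1^2 * norm s ^ 2) / 2) * cosh (1 * x) > 0"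
    by (rule Q_sign[of 1 \<kappa> "norm s ^ 2"]) (use assms c2 in auto)
  have "(-1) * Dg s (\<kappa> *\<^sub>R s) (\<kappa> *\<^sub>R s) > 0"
    by (rule Dg_par_core[OF assms(1) _ _ x0]) (use A B assms in \<open>auto simp: algebra_simps\<close>)
  then show ?thesis by simp
qed

lemma tanh_sq_pos:
  fixes t :: "'a::euclidean_space"
  assumes t: "t \<noteq> 0"
  shows "0 < (\<integral>z. gd z * tanh (m + t \<bullet> z) ^ 2 \<partial>lborel)"
proof (rule integral_pos_cont)
  show "integrable lborel (\<lambda>z. gd z * tanh (m + t \<bullet> z) ^ 2)"
  proof (rule gd_bdd_int)
    show "\<bar>tanh (m + t \<bullet> z) ^ 2\<bar> \<le> 1" for z
      using tanh_abs_le1[of "m + t \<bullet> z"] by (simp add: abs_square_le_1)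
  qed measurable
  show "continuous_on UNIV (\<lambda>z. gd z * tanh (m + t \<bullet> z) ^ 2)"
    unfolding Defs.std_normal_density_def[abs_def]
    by (intro continuous_intros) (auto simp: less_imp_neq[OF cosh_real_pos, symmetric])
  show "0 \<le> gd z * tanh (m + t \<bullet> z) ^ 2" for z using gd_pos[of z] by simp
  define z0 where "z0 = ((1 - m) / norm t ^ 2) *\<^sub>R t"
  have "m + t \<bullet> z0 = 1" unfolding z0_def using t by (simp add: power2_norm_eq_inner)
  then show "0 < gd z0 * tanh (m + t \<bullet> z0) ^ 2" using gd_pos[of z0] by simp
qed

lemma shift_half:
  fixes s t u :: "'a::euclidean_space"
  assumes us: "u \<bullet> s = 0"
  shows "(\<integral>y. gd (y - s) * (tanh (t \<bullet> y) * (u \<bullet> y)) \<partial>lborel) = (t \<bullet> u) * (1 - (\<integral>z. gd z * tanh (t \<bullet> s + t \<bullet> z) ^ 2 \<partial>lborel))"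
proof -
  have "(\<integral>y. gd (y - s) * (tanh (t \<bullet> y) * (u \<bullet> y)) \<partial>lborel) = (\<integral>z. gd ((z + s) - s) * (tanh (t \<bullet> (z + s)) * (u \<bullet> (z + s))) \<partial>lborel)"
    by (rule integral_shift[symmetric])
  also have "\<dots> = (\<integral>z. gd z * ((u \<bullet> z) * tanh (t \<bullet> s + t \<bullet> z)) \<partial>lborel)"
    using us by (simp add: inner_add_right algebra_simps)
  also have "\<dots> = (t \<bullet> u) * (\<integral>z. gd z * (1 - tanh (t \<bullet> s + t \<bullet> z) ^ 2) \<partial>lborel)"
    by (rule stein)
  also have "(\<integral>z. gd z * (1 - tanh (t \<bullet> s + t \<bullet> z) ^ 2) \<partial>lborel) = 1 - (\<integral>z. gd z * tanh (t \<bullet> s + t \<bullet> z) ^ 2 \<partial>lborel)"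
  proof -
    have i: "integrable lborel (\<lambda>z. gd (z::'a) * tanh (t \<bullet> s + t \<bullet> z) ^ 2)"
    proof (rule gd_bdd_int)
      show "\<bar>tanh (t \<bullet> s + t \<bullet> z) ^ 2\<bar> \<le> 1" for z
        using tanh_abs_le1[of "t \<bullet> s + t \<bullet> z"] by (simp add: abs_square_le_1)
    qed measurable
    have "(\<integral>z. gd z * (1 - tanh (t \<bullet> s + t \<bullet> z) ^ 2) \<partial>lborel) = (\<integral>z. gd z - gd z * tanh (t \<bullet> s + t \<bullet> z) ^ 2 \<partial>lborel)"
      by (simp add: algebra_simps)
    also have "\<dots> = (\<integral>z. gd (z::'a) \<partial>lborel) - (\<integral>z. gd z * tanh (t \<bullet> s + t \<bullet> z) ^ 2 \<partial>lborel)"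
      by (rule Bochner_Integration.integral_diff[OF gd_integrable i])
    finally show ?thesis using gd_integral[where 'a='a] by simp
  qed
  finally show ?thesis .
qed

lemma Dg_orth:
  fixes s t u :: "'a::euclidean_space"
  assumes us: "u \<bullet> s = 0" and tu: "t \<bullet> u > 0"
  shows "Dg s t u < 0"
proof -
  have t: "t \<noteq> 0" using tu by auto
  have ienv: "integrable lborel (\<lambda>y. gd (y - m) * (tanh (t \<bullet> y) * (u \<bullet> y)))" for m
  proof (rule integrable_bound_real)
    show "integrable lborel (\<lambda>y. norm u * (gd (y - m) * (1 + norm y ^ 2)))"
      by (intro Bochner_Integration.integrable_mult_right env_integrable)
    fix y :: 'a
    have "\<bar>tanh (t \<bullet> y) * (u \<bullet> y)\<bar> \<le> 1 * (norm u * norm y)"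
      unfolding abs_mult using tanh_abs_le1 Cauchy_Schwarz_ineq2[of u y] by (intro mult_mono) auto
    also have "\<dots> \<le> norm u * (1 + norm y ^ 2)" using norm_le_sq[of y] by (simp add: mult_left_mono)
    finally have "gd (y - m) * \<bar>tanh (t \<bullet> y) * (u \<bullet> y)\<bar> \<le> gd (y - m) * (norm u * (1 + norm y ^ 2))"
      using gd_pos[of "y - m"] by (intro mult_left_mono) auto
    then show "\<bar>gd (y - m) * (tanh (t \<bullet> y) * (u \<bullet> y))\<bar> \<le> norm u * (gd (y - m) * (1 + norm y ^ 2))"
      using gd_pos[of "y - m"] by (simp add: abs_mult mult_ac)
  qed measurable
  have us': "u \<bullet> (- s) = 0" using us by simp
  define P1 where "P1 = (\<integral>z. gd z * tanh (t \<bullet> s + t \<bullet> z) ^ 2 \<partial>lborel)"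
  define P2 where "P2 = (\<integral>z. gd z * tanh (t \<bullet> (- s) + t \<bullet> z) ^ 2 \<partial>lborel)"
  have "(\<integral>y. mix_density s y * (tanh (t \<bullet> y) * (u \<bullet> y)) \<partial>lborel)
      = (\<integral>y. 1/2 * (gd (y - s) * (tanh (t \<bullet> y) * (u \<bullet> y))) + 1/2 * (gd (y - (- s)) * (tanh (t \<bullet> y) * (u \<bullet> y))) \<partial>lborel)"
    unfolding mix_density_def by (simp add: algebra_simps)
  also have "\<dots> = 1/2 * (\<integral>y. gd (y - s) * (tanh (t \<bullet> y) * (u \<bullet> y)) \<partial>lborel) + 1/2 * (\<integral>y. gd (y - (- s)) * (tanh (t \<bullet> y) * (u \<bullet> y)) \<partial>lborel)"
    using ienv[of s] ienv[of "- s"] by simp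
  also have "\<dots> = 1/2 * ((t \<bullet> u) * (1 - P1)) + 1/2 * ((t \<bullet> u) * (1 - P2))"
    unfolding P1_def P2_def shift_half[OF us] shift_half[OF us'] ..
  finally have eq: "Dg s t u = - (t \<bullet> u) * (P1 + P2) / 2"
    unfolding Dg_def by (simp add: algebra_simps)
  have "P1 > 0" "P2 > 0" unfolding P1_def P2_def by (rule tanh_sq_pos[OF t])+
  then show ?thesis unfolding eq using tu by (simp add: mult_pos_pos)
qed

lemma Dg_scale: "Dg s t (c *\<^sub>R v) = c * Dg s t v"
proof -
  have "(\<lambda>y. mix_density s y * (tanh (t \<bullet> y) * ((c *\<^sub>R v) \<bullet> y))) = (\<lambda>y. c * (mix_density s y * (tanh (t \<bullet> y) * (v \<bullet> y))))"
    by (rule ext) (simp add: algebra_simps)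
  then show ?thesis unfolding Dg_def by (simp add: algebra_simps)
qed

lemma Dg_neg: "Dg s (- t) (- t) = Dg s t (t::'a::euclidean_space)"
  unfolding Dg_def by (simp add: algebra_simps)

lemma ray_deriv: "((\<lambda>r. popG s (r *\<^sub>R v)) has_real_derivative Dg s (r *\<^sub>R v) v) (at r)"
proof -
  have d1: "((\<lambda>r. r *\<^sub>R v) has_derivative (\<lambda>h. h *\<^sub>R v)) (at r)"
    by (auto intro!: derivative_eq_intros)
  have "((\<lambda>r. popG s (r *\<^sub>R v)) has_derivative (\<lambda>h. Dg s (r *\<^sub>R v) (h *\<^sub>R v))) (at r)"
    by (rule has_derivative_compose[OF d1 popG_has_derivative])
  moreover have "(\<lambda>h. Dg s (r *\<^sub>R v) (h *\<^sub>R v)) = (*) (Dg s (r *\<^sub>R v) v)"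
    by (rule ext) (simp add: Dg_scale)
  ultimately show ?thesis unfolding has_field_derivative_def by simp
qed

lemma ray_strict:
  assumes k: "0 < k" and pos: "\<And>z. 0 < z \<Longrightarrow> z < k \<Longrightarrow> Dg s (z *\<^sub>R v) v > 0"
  shows "popG s 0 < popG s (k *\<^sub>R v)"
proof -
  obtain z where z: "0 < z" "z < k" "popG s (k *\<^sub>R v) - popG s (0 *\<^sub>R v) = (k - 0) * Dg s (z *\<^sub>R v) v"
    using MVT2[OF k, of "\<lambda>r. popG s (r *\<^sub>R v)" "\<lambda>r. Dg s (r *\<^sub>R v) v"] ray_deriv by blast
  moreover have "0 < k * Dg s (z *\<^sub>R v) v" using pos[OF z(1,2)] k by (rule mult_pos_pos[rotated])
  ultimately show ?thesis by simp
qed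

lemma ray_strict_neg:
  assumes k: "0 < k" and neg: "\<And>z. 0 < z \<Longrightarrow> z < k \<Longrightarrow> Dg s (z *\<^sub>R v) v < 0"
  shows "popG s (k *\<^sub>R v) < popG s 0"
proof -
  obtain z where z: "0 < z" "z < k" "popG s (k *\<^sub>R v) - popG s (0 *\<^sub>R v) = (k - 0) * Dg s (z *\<^sub>R v) v"
    using MVT2[OF k, of "\<lambda>r. popG s (r *\<^sub>R v)" "\<lambda>r. Dg s (r *\<^sub>R v) v"] ray_deriv by blast
  moreover have "k * Dg s (z *\<^sub>R v) v < 0" using neg[OF z(1,2)] k by (simp add: mult_pos_neg)
  ultimately show ?thesis by simp
qed

lemma Dg_dir_pos:
  fixes s :: "'a::euclidean_space"
  assumes "s \<noteq> 0" "0 < z" "z < 1"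
  shows "Dg s (z *\<^sub>R s) s > 0"
proof -
  have "Dg s (z *\<^sub>R s) (z *\<^sub>R s) > 0" by (rule Dg_par_lt1[OF assms])
  then show ?thesis unfolding Dg_scale using assms by (simp add: zero_less_mult_iff)
qed

lemma G_up:
  fixes s :: "'a::euclidean_space"
  assumes s: "s \<noteq> 0" and k: "0 < k" "k \<le> 1"
  shows "popG s 0 < popG s (k *\<^sub>R s)"
  by (rule ray_strict[OF k(1)]) (rule Dg_dir_pos[OF s], use k in auto)

lemma stationary_subset:
  fixes s :: "'a::euclidean_space"
  assumes s: "s \<noteq> 0" and st: "stationary_point (popG s) t"
  shows "t = 0 \<or> t = s \<or> t = - s"
proof (rule ccontr)
  assume nt: "\<not> (t = 0 \<or> t = s \<or> t = - s)"
  have D0: "Dg s t h = 0" for h using st unfolding stationary_iff by simp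
  define c where "c = (t \<bullet> s) / norm s ^ 2"
  define u where "u = t - c *\<^sub>R s"
  have ns: "norm s ^ 2 \<noteq> 0" using s by simp
  have us: "u \<bullet> s = 0" unfolding u_def c_def using ns by (simp add: inner_diff_left power2_norm_eq_inner)
  have tu: "t \<bullet> u = u \<bullet> u"
  proof -
    have "t = u + c *\<^sub>R s" unfolding u_def by simp
    then have "t \<bullet> u = u \<bullet> u + c * (s \<bullet> u)" by (metis inner_add_left inner_scaleR_left)
    then show ?thesis using us by (simp add: inner_commute)
  qed
  show False
  proof (cases "u = 0")
    case False
    then have "t \<bullet> u > 0" unfolding tu by simp
    then have "Dg s t u < 0" by (rule Dg_orth[OF us])
    then show False using D0 by simp
  next
    case True
    then have tc: "t = c *\<^sub>R s" unfolding u_def by simp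
    have c0: "c \<noteq> 0" using nt tc by auto
    have c1: "\<bar>c\<bar> \<noteq> 1" using nt tc by (auto simp: abs_if split: if_splits)
    have "Dg s (\<bar>c\<bar> *\<^sub>R s) (\<bar>c\<bar> *\<^sub>R s) = Dg s t t"
      using tc Dg_neg[of s t] by (cases "c \<ge> 0") auto
    also have "\<dots> = 0" by (rule D0)
    finally have z: "Dg s (\<bar>c\<bar> *\<^sub>R s) (\<bar>c\<bar> *\<^sub>R s) = 0" .
    consider "\<bar>c\<bar> < 1" | "\<bar>c\<bar> > 1" using c1 by linarith
    then show False
    proof cases
      case 1 then show False using Dg_par_lt1[OF s, of "\<bar>c\<bar>"] z c0 by simp
    next
      case 2 then show False using Dg_par_gt1[OF s, of "\<bar>c\<bar>"] z by simp
    qed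
  qed
qed

lemma dim1_par:
  fixes s u :: "'a::euclidean_space"
  assumes d: "DIM('a) = 1" and s: "s \<noteq> 0" and us: "u \<bullet> s = 0"
  shows "u = 0"
proof -
  obtain b where B: "(Basis::'a set) = {b}" using d by (metis card_1_singletonE)
  have rep: "x = (x \<bullet> b) *\<^sub>R b" for x :: 'a
    using euclidean_representation[of x] unfolding B by simp
  have bb: "b \<bullet> b = 1" using B by (metis insertI1 inner_Basis)
  have "u \<bullet> s = (u \<bullet> b) * (s \<bullet> b)"
    by (subst rep[of u], subst rep[of s]) (simp add: bb)
  moreover have "s \<bullet> b \<noteq> 0" using s rep[of s] by (metis scale_zero_left)
  ultimately have "u \<bullet> b = 0" using us by simp
  then show ?thesis using rep[of u] by simp
qed

lemma exists_orth:
  fixes s :: "'a::euclidean_space"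
  assumes d: "DIM('a) > 1"
  shows "\<exists>u. u \<noteq> 0 \<and> u \<bullet> s = 0"
proof (rule ccontr)
  assume no: "\<not> ?thesis"
  obtain b1 b2 :: 'a where b: "b1 \<in> Basis" "b2 \<in> Basis" "b1 \<noteq> b2"
  proof -
    have "card (Basis::'a set) \<ge> 2" using d by simp
    then obtain A where "A \<subseteq> (Basis::'a set)" "card A = 2" by (meson obtain_subset_with_card_n)
    then obtain x y where "A = {x, y}" "x \<noteq> y" by (auto simp: card_2_iff)
    then show ?thesis using that \<open>A \<subseteq> Basis\<close> by blast
  qed
  define p where "p v = v - ((v \<bullet> s) / norm s ^ 2) *\<^sub>R s" for v
  have ps: "p v \<bullet> s = 0" if "s \<noteq> 0" for v
    unfolding p_def using that by (simp add: inner_diff_left power2_norm_eq_inner)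
  show False
  proof (cases "s = 0")
    case True then show False using no b(1) nonzero_Basis by fastforce
  next
    case False
    then have p0: "p v = 0" for v using no ps by blast
    have "b1 = ((b1 \<bullet> s) / norm s ^ 2) *\<^sub>R s" "b2 = ((b2 \<bullet> s) / norm s ^ 2) *\<^sub>R s"
      using p0[of b1] p0[of b2] unfolding p_def by auto
    then have "b1 \<bullet> b2 = ((b1 \<bullet> s) / norm s ^ 2) * ((b2 \<bullet> s) / norm s ^ 2) * (s \<bullet> s)"
      by (metis inner_scaleR_left inner_scaleR_right mult.assoc)
    moreover have "b1 \<bullet> b2 = 0" using b by (simp add: inner_not_same_Basis)
    ultimately have "(b1 \<bullet> s) = 0 \<or> (b2 \<bullet> s) = 0" using False by simp
    then show False
      using p0[of b1] p0[of b2] b unfolding p_def by (auto simp: nonzero_Basis)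
  qed
qed

lemma not_local_max0:
  fixes s :: "'a::euclidean_space"
  assumes s: "s \<noteq> 0"
  shows "\<not> local_max_at (popG s) 0"
proof
  assume "local_max_at (popG s) 0"
  then obtain d where d: "d > 0" and P: "\<And>y. y \<noteq> 0 \<Longrightarrow> dist y 0 < d \<Longrightarrow> popG s y \<le> popG s 0"
    unfolding local_max_at_def eventually_at by auto
  define k where "k = min 1 (d / (2 * norm s))"
  have k: "0 < k" "k \<le> 1" unfolding k_def using d s by auto
  have "norm (k *\<^sub>R s) \<le> d / 2"
  proof -
    have "norm (k *\<^sub>R s) = k * norm s" using k by simp
    also have "\<dots> \<le> d / (2 * norm s) * norm s" unfolding k_def by (intro mult_right_mono) auto
    also have "\<dots> = d / 2" using s by simp
    finally show ?thesis .
  qed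
  then have "popG s (k *\<^sub>R s) \<le> popG s 0" using d k s by (intro P) auto
  moreover have "popG s 0 < popG s (k *\<^sub>R s)" by (rule G_up[OF s k])
  ultimately show False by simp
qed

lemma not_local_min0:
  fixes s :: "'a::euclidean_space"
  assumes d1: "DIM('a) > 1"
  shows "\<not> local_min_at (popG s) 0"
proof
  obtain u where u: "u \<noteq> 0" "u \<bullet> s = 0" using exists_orth[OF d1] by blast
  assume "local_min_at (popG s) 0"
  then obtain d where d: "d > 0" and P: "\<And>y. y \<noteq> 0 \<Longrightarrow> dist y 0 < d \<Longrightarrow> popG s 0 \<le> popG s y"
    unfolding local_min_at_def eventually_at by auto
  define k where "k = d / (2 * norm u)"
  have k: "k > 0" unfolding k_def using d u by auto
  have "norm (k *\<^sub>R u) = d / 2" unfolding k_def using d u by simp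
  then have "popG s 0 \<le> popG s (k *\<^sub>R u)" using d k u by (intro P) auto
  moreover have "popG s (k *\<^sub>R u) < popG s 0"
  proof (rule ray_strict_neg[OF k])
    fix z :: real assume z: "0 < z" "z < k"
    show "Dg s (z *\<^sub>R u) u < 0"
      by (rule Dg_orth[OF u(2)]) (use z u in simp)
  qed
  ultimately show False by simp
qed

lemma local_min0_dim1:
  fixes s :: "'a::euclidean_space"
  assumes d1: "DIM('a) = 1" and s: "s \<noteq> 0"
  shows "local_min_at (popG s) 0"
  unfolding local_min_at_def eventually_at
proof (intro exI[of _ "norm s"] conjI ballI impI)
  show "norm s > 0" using s by simp
  fix y :: 'a assume y: "y \<noteq> 0 \<and> dist y 0 < norm s"
  define c where "c = (y \<bullet> s) / norm s ^ 2"
  have ns: "norm s ^ 2 \<noteq> 0" using s by simp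
  have "(y - c *\<^sub>R s) \<bullet> s = 0" unfolding c_def using ns by (simp add: inner_diff_left power2_norm_eq_inner)
  then have "y - c *\<^sub>R s = 0" by (rule dim1_par[OF d1 s])
  then have yc: "y = c *\<^sub>R s" by simp
  have "\<bar>c\<bar> * norm s < norm s" using y yc by simp
  then have c1: "\<bar>c\<bar> < 1" using s by simp
  have c0: "c \<noteq> 0" using y yc by auto
  have "popG s y = popG s (\<bar>c\<bar> *\<^sub>R s)"
    unfolding yc by (cases "c \<ge> 0") (auto simp: popG_minus)
  moreover have "popG s 0 < popG s (\<bar>c\<bar> *\<^sub>R s)" using c0 c1 by (intro G_up[OF s]) auto
  ultimately show "popG s 0 \<le> popG s y" by simp
qed

theorem corollary3:
  fixes tstar :: "'a::euclidean_space"
  assumes "tstar \<noteq> 0"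
  shows "{t. stationary_point (popG tstar) t} = {0, tstar, - tstar} \<and>
    (DIM('a) = 1 \<longrightarrow> local_min_at (popG tstar) 0 \<and>
           global_max_at (popG tstar) tstar \<and> global_max_at (popG tstar) (- tstar)) \<and>
    (DIM('a) > 1 \<longrightarrow> saddle_point (popG tstar) 0 \<and>
           global_max_at (popG tstar) tstar \<and> global_max_at (popG tstar) (- tstar))"
proof (intro conjI impI)
  show "{t. stationary_point (popG tstar) t} = {0, tstar, - tstar}"
    using stationary_subset[OF assms] stationary_0 stationary_s stationary_ms by blast
  show "local_min_at (popG tstar) 0" if "DIM('a) = 1" by (rule local_min0_dim1[OF that assms])
  show "saddle_point (popG tstar) 0" if "DIM('a) > 1"
    unfolding saddle_point_def using stationary_0 not_local_min0[OF that] not_local_max0[OF assms] by blast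
qed (rule global_max_s global_max_ms)+


end
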